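(* Let $(\mathcal{C},\mathbb{E},\mathfrak{s})$ be an extriangulated category with enough injective objects and enough projective morphisms, and let $\mathbb{F}\subseteq\mathbb{E}$ be an additive subfunctor having enough injective morphisms. Then: (1) the pair $\big({}^{\perp_{\mathbb{E}}}(\mathbb{F}\text{-}\mathrm{inj}),\ ({}^{\perp_{\mathbb{E}}}(\mathbb{F}\text{-}\mathrm{inj}))^{\perp_{\mathbb{E}}}\big)$ is a complete $\mathbb{E}$-cotorsion pair of ideals; (2) $\mathrm{Ph}(\mathbb{F})^{\perp_{\mathbb{E}}}=\mathrm{Ph}(\mathbb{F})^\star\text{-}\mathrm{inj}$, and $\mathrm{Ph}(\mathbb{F})^{\perp_{\mathbb{E}}}$ is the minimal ideal containing $\mathbb{F}\text{-}\mathrm{inj}$ and satisfying property (C), i.e. it contains $\mathbb{F}\text{-}\mathrm{inj}$, satisfies (C), and is contained in every ideal that contains $\mathbb{F}\text{-}\mathrm{inj}$ and satisfies (C); (3) $\mathrm{Ph}(\mathbb{F})^\star$ is the maximal additive subfunctor of $\mathbb{F}$ having enough special injective morphisms, i.e. $\mathrm{Ph}(\mathbb{F})^\star\subseteq\mathbb{F}$, it has enough special injective morphisms, and it contains every additive subfunctor $\mathbb{F}'\subseteq\mathbb{F}$ having enough special injective morphisms.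
   Context: An extriangulated category $(\mathcal{C},\mathbb{E},\mathfrak{s})$ (Nakaoka–Palu): additive $\mathcal{C}$, biadditive $\mathbb{E}:\mathcal{C}^{\mathrm{op}}\times\mathcal{C}\to\mathrm{Ab}$, additive realization $\mathfrak{s}$ assigning to each $\delta\in\mathbb{E}(C,A)$ an equivalence class of sequences $A\to B\to C$, forming $\mathbb{E}$-triangles $A\to B\to C\overset{\delta}{\dashrightarrow}$, satisfying (ET1)–(ET4), (ET3)$^{\mathrm{op}}$, (ET4)$^{\mathrm{op}}$. Notation $a_\star\delta=\mathbb{E}(C,a)(\delta)$, $c^\star\delta=\mathbb{E}(c,A)(\delta)$; a morphism of $\mathbb{E}$-triangles is a commuting triple $(a,b,c)$ with $a_\star\delta=c^\star\delta'$. Injective object $E$: $\mathbb{E}(C,E)=0$ for all $C$; enough injective objects: every $A$ admits an $\mathbb{E}$-triangle $A\to E\to C\overset{\delta}{\dashrightarrow}$ with $E$ injective. Enough projective morphisms: every $C$ admits an $\mathbb{E}$-triangle $K\to P\xrightarrow{p}C\overset{\gamma}{\dashrightarrow}$ with $p^\star\delta=0$ for all $\delta\in\mathbb{E}(C,A)$. Ideal: class of morphisms with zeros, closed under sums and two-sided composition. Additive subfunctor $\mathbb{F}$: subgroups $\mathbb{F}(C,A)\subseteq\mathbb{E}(C,A)$ stable under $a_\star,c^\star$; $\mathbb{F}$-triangles have extension in $\mathbb{F}$. $\mathrm{Ph}(\mathbb{F})$: morphisms $\varphi:X\to C$ with $\varphi^\star\delta\in\mathbb{F}(X,A)$ for all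 $\delta\in\mathbb{E}(C,A)$. $\mathbb{F}\text{-}\mathrm{inj}$: $i:A\to Y$ with $i_\star\delta=0$ for all $\delta\in\mathbb{F}(C,A)$. For an ideal $\mathcal{I}$, $\mathcal{I}^\star(X,A)=\{i^\star\delta\mid i\in\mathcal{I}(X,C),\delta\in\mathbb{E}(C,A)\}$. $\mathbb{F}$ has enough injective morphisms: every $A$ admits an $\mathbb{F}$-triangle $A\xrightarrow{e}B\to C\overset{\delta}{\dashrightarrow}$ with $e\in\mathbb{F}\text{-}\mathrm{inj}$; enough special injective morphisms: moreover there is an $\mathbb{E}$-triangle $A\to B'\to C'\overset{\delta'}{\dashrightarrow}$ and a morphism $(\mathrm{id}_A,b,\varphi)$ from the former to it with $\varphi\in\mathrm{Ph}(\mathbb{F})$. $\mathcal{M}^{\perp_{\mathbb{E}}}=\{g:A\to Y\mid m^\star g_\star\delta=0\ \forall m\in\mathcal{M},\,m:X\to C,\ \forall\delta\in\mathbb{E}(C,A)\}$; ${}^{\perp_{\mathbb{E}}}\mathcal{M}=\{g:X\to C\mid g^\star m_\star\delta=0\ \forall m\in\mathcal{M},\,m:A\to Y,\ \forall\delta\in\mathbb{E}(C,A)\}$. $\mathbb{E}$-cotorsion pair: $\mathcal{I}={}^{\perp_{\mathbb{E}}}\mathcal{J}$, $\mathcal{J}=\mathcal{I}^{\perp_{\mathbb{E}}}$; complete if $\mathcal{I}$ is special precovering (each $C$ has $i:X\to C$ in $\mathcal{I}$ with a morphism $(j,b,\mathrm{id}_C)$ of $\mathbb{E}$-triangles from some $A\to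 B\to C\overset{\delta}{\dashrightarrow}$ to some $A'\to X\xrightarrow{i}C\overset{\delta'}{\dashrightarrow}$, $j\in\mathcal{I}^{\perp_{\mathbb{E}}}$) and $\mathcal{J}$ is special preenveloping (each $A$ has $e:A\to X$ in $\mathcal{J}$ with a morphism $(\mathrm{id}_A,b,j)$ from some $A\xrightarrow{e}X\to Y\overset{\delta}{\dashrightarrow}$ to some $A\to B\to C\overset{\delta'}{\dashrightarrow}$, $j\in{}^{\perp_{\mathbb{E}}}\mathcal{J}$). Property (C) of an ideal $\mathcal{K}$: for every morphism of $\mathbb{E}$-triangles $(f,g,h)$ from $A\to B\to E\overset{\gamma}{\dashrightarrow}$ to $X\to Y\to Z\overset{\delta}{\dashrightarrow}$ with $f\in\mathcal{K}$ and $E$ injective, one has $g\in\mathcal{K}$. *)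

theory Defs
  imports Main
begin

section \<open>Extriangulated categories (Nakaoka--Palu), arrow-style encoding\<close>

text \<open>Objects have type 'o, morphisms type 'm (each morphism carries its source and
target), extensions type 'e (each extension delta in E(C,A) carries C = eC delta and
A = eA delta).  The realization s is encoded as the relation  real delta x y, meaning
that the sequence  A --x--> B --y--> C  belongs to the equivalence class s(delta).\<close>

record ('o, 'm, 'e) etcat =
  Ob    :: "'o set"
  Mor   :: "'m set"
  src   :: "'m \<Rightarrow> 'o"
  tgt   :: "'m \<Rightarrow> 'o"
  idm   :: "'o \<Rightarrow> 'm"
  cmp   :: "'m \<Rightarrow> 'm \<Rightarrow> 'm"          \<comment> \<open>cmp g f = g o f\<close>
  madd  :: "'m \<Rightarrow> 'm \<Rightarrow> 'm"
  mneg  :: "'m \<Rightarrow> 'm"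
  mzero :: "'o \<Rightarrow> 'o \<Rightarrow> 'm"
  Ex    :: "'e set"
  eC    :: "'e \<Rightarrow> 'o"
  eA    :: "'e \<Rightarrow> 'o"
  eadd  :: "'e \<Rightarrow> 'e \<Rightarrow> 'e"
  eneg  :: "'e \<Rightarrow> 'e"
  ezero :: "'o \<Rightarrow> 'o \<Rightarrow> 'e"         \<comment> \<open>zero of E(C,A)\<close>
  pull  :: "'m \<Rightarrow> 'e \<Rightarrow> 'e"          \<comment> \<open>pull c delta = c^* delta\<close>
  push  :: "'m \<Rightarrow> 'e \<Rightarrow> 'e"          \<comment> \<open>push a delta = a_* delta\<close>
  real  :: "'e \<Rightarrow> 'm \<Rightarrow> 'm \<Rightarrow> bool"

definition Hom :: "('o,'m,'e) etcat \<Rightarrow> 'o \<Rightarrow> 'o \<Rightarrow> 'm set" where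
  "Hom X A B = {f \<in> Mor X. src X f = A \<and> tgt X f = B}"

definition E :: "('o,'m,'e) etcat \<Rightarrow> 'o \<Rightarrow> 'o \<Rightarrow> 'e set" where
  "E X C A = {d \<in> Ex X. eC X d = C \<and> eA X d = A}"

definition is_category :: "('o,'m,'e) etcat \<Rightarrow> bool" where
  "is_category X \<longleftrightarrow>
     (\<forall>f\<in>Mor X. src X f \<in> Ob X \<and> tgt X f \<in> Ob X) \<and>
     (\<forall>A\<in>Ob X. idm X A \<in> Hom X A A) \<and>
     (\<forall>f\<in>Mor X. \<forall>g\<in>Mor X. tgt X f = src X g \<longrightarrow> cmp X g f \<in> Hom X (src X f) (tgt X g)) \<and>
     (\<forall>f\<in>Mor X. \<forall>g\<in>Mor X. \<forall>h\<in>Mor X. tgt X f = src X g \<and> tgt X g = src X h \<longrightarrow>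
        cmp X h (cmp X g f) = cmp X (cmp X h g) f) \<and>
     (\<forall>f\<in>Mor X. cmp X (idm X (tgt X f)) f = f \<and> cmp X f (idm X (src X f)) = f)"

definition preadditive :: "('o,'m,'e) etcat \<Rightarrow> bool" where
  "preadditive X \<longleftrightarrow> is_category X \<and>
     (\<forall>A\<in>Ob X. \<forall>B\<in>Ob X.
        mzero X A B \<in> Hom X A B \<and>
        (\<forall>f\<in>Hom X A B. \<forall>g\<in>Hom X A B. madd X f g \<in> Hom X A B) \<and>
        (\<forall>f\<in>Hom X A B. mneg X f \<in> Hom X A B) \<and>
        (\<forall>f\<in>Hom X A B. \<forall>g\<in>Hom X A B. \<forall>h\<in>Hom X A B.
            madd X (madd X f g) h = madd X f (madd X g h)) \<and>
        (\<forall>f\<in>Hom X A B. \<forall>g\<in>Hom X A B. madd X f g = madd X g f) \<and>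
        (\<forall>f\<in>Hom X A B. madd X (mzero X A B) f = f) \<and>
        (\<forall>f\<in>Hom X A B. madd X f (mneg X f) = mzero X A B) \<and>
        (\<forall>f\<in>Hom X A B. \<forall>g\<in>Hom X A B. \<forall>h\<in>Mor X. src X h = B \<longrightarrow>
            cmp X h (madd X f g) = madd X (cmp X h f) (cmp X h g)) \<and>
        (\<forall>f\<in>Hom X A B. \<forall>g\<in>Hom X A B. \<forall>h\<in>Mor X. tgt X h = A \<longrightarrow>
            cmp X (madd X f g) h = madd X (cmp X f h) (cmp X g h)))"

definition zero_obj :: "('o,'m,'e) etcat \<Rightarrow> 'o \<Rightarrow> bool" where
  "zero_obj X Z \<longleftrightarrow> Z \<in> Ob X \<and>
     (\<forall>A\<in>Ob X. (\<exists>!f. f \<in> Hom X Z A) \<and> (\<exists>!f. f \<in> Hom X A Z))"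

definition is_biprod :: "('o,'m,'e) etcat \<Rightarrow> 'o \<Rightarrow> 'o \<Rightarrow> 'o \<Rightarrow> 'm \<Rightarrow> 'm \<Rightarrow> 'm \<Rightarrow> 'm \<Rightarrow> bool" where
  "is_biprod X A B S i1 i2 p1 p2 \<longleftrightarrow> S \<in> Ob X \<and>
     i1 \<in> Hom X A S \<and> i2 \<in> Hom X B S \<and> p1 \<in> Hom X S A \<and> p2 \<in> Hom X S B \<and>
     cmp X p1 i1 = idm X A \<and> cmp X p2 i2 = idm X B \<and>
     cmp X p1 i2 = mzero X B A \<and> cmp X p2 i1 = mzero X A B \<and>
     madd X (cmp X i1 p1) (cmp X i2 p2) = idm X S"

definition additive_cat :: "('o,'m,'e) etcat \<Rightarrow> bool" where
  "additive_cat X \<longleftrightarrow> preadditive X \<and> (\<exists>Z. zero_obj X Z) \<and>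
     (\<forall>A\<in>Ob X. \<forall>B\<in>Ob X. \<exists>S i1 i2 p1 p2. is_biprod X A B S i1 i2 p1 p2)"

text \<open>(ET1): E is a biadditive functor C^op x C -> Ab.\<close>
definition biadditive_E :: "('o,'m,'e) etcat \<Rightarrow> bool" where
  "biadditive_E X \<longleftrightarrow>
     (\<forall>d\<in>Ex X. eC X d \<in> Ob X \<and> eA X d \<in> Ob X) \<and>
     (\<forall>C\<in>Ob X. \<forall>A\<in>Ob X.
        ezero X C A \<in> E X C A \<and>
        (\<forall>d\<in>E X C A. \<forall>d'\<in>E X C A. eadd X d d' \<in> E X C A) \<and>
        (\<forall>d\<in>E X C A. eneg X d \<in> E X C A) \<and>
        (\<forall>d\<in>E X C A. \<forall>d'\<in>E X C A. \<forall>d''\<in>E X C A.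
            eadd X (eadd X d d') d'' = eadd X d (eadd X d' d'')) \<and>
        (\<forall>d\<in>E X C A. \<forall>d'\<in>E X C A. eadd X d d' = eadd X d' d) \<and>
        (\<forall>d\<in>E X C A. eadd X (ezero X C A) d = d) \<and>
        (\<forall>d\<in>E X C A. eadd X d (eneg X d) = ezero X C A)) \<and>
     (\<forall>d\<in>Ex X. \<forall>c\<in>Mor X. tgt X c = eC X d \<longrightarrow> pull X c d \<in> E X (src X c) (eA X d)) \<and>
     (\<forall>d\<in>Ex X. \<forall>a\<in>Mor X. src X a = eA X d \<longrightarrow> push X a d \<in> E X (eC X d) (tgt X a)) \<and>
     (\<forall>d\<in>Ex X. pull X (idm X (eC X d)) d = d \<and> push X (idm X (eA X d)) d = d) \<and>
     (\<forall>d\<in>Ex X. \<forall>c\<in>Mor X. \<forall>c'\<in>Mor X. tgt X c = eC X d \<and> tgt X c' = src X c \<longrightarrow>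
        pull X (cmp X c c') d = pull X c' (pull X c d)) \<and>
     (\<forall>d\<in>Ex X. \<forall>a\<in>Mor X. \<forall>a'\<in>Mor X. src X a = eA X d \<and> src X a' = tgt X a \<longrightarrow>
        push X (cmp X a' a) d = push X a' (push X a d)) \<and>
     (\<forall>d\<in>Ex X. \<forall>a\<in>Mor X. \<forall>c\<in>Mor X. src X a = eA X d \<and> tgt X c = eC X d \<longrightarrow>
        push X a (pull X c d) = pull X c (push X a d)) \<and>
     (\<forall>d\<in>Ex X. \<forall>d'\<in>Ex X. \<forall>c\<in>Mor X. eC X d' = eC X d \<and> eA X d' = eA X d \<and> tgt X c = eC X d \<longrightarrow>
        pull X c (eadd X d d') = eadd X (pull X c d) (pull X c d')) \<and>
     (\<forall>d\<in>Ex X. \<forall>d'\<in>Ex X. \<forall>a\<in>Mor X. eC X d' = eC X d \<and> eA X d' = eA X d \<and> src X a = eA X d \<longrightarrow>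
        push X a (eadd X d d') = eadd X (push X a d) (push X a d')) \<and>
     (\<forall>d\<in>Ex X. \<forall>c\<in>Mor X. \<forall>c'\<in>Mor X. tgt X c = eC X d \<and> tgt X c' = eC X d \<and> src X c' = src X c \<longrightarrow>
        pull X (madd X c c') d = eadd X (pull X c d) (pull X c' d)) \<and>
     (\<forall>d\<in>Ex X. \<forall>a\<in>Mor X. \<forall>a'\<in>Mor X. src X a = eA X d \<and> src X a' = eA X d \<and> tgt X a' = tgt X a \<longrightarrow>
        push X (madd X a a') d = eadd X (push X a d) (push X a' d))"

definition iso :: "('o,'m,'e) etcat \<Rightarrow> 'm \<Rightarrow> bool" where
  "iso X b \<longleftrightarrow> b \<in> Mor X \<and> (\<exists>b'\<in>Hom X (tgt X b) (src X b).
      cmp X b' b = idm X (src X b) \<and> cmp X b b' = idm X (tgt X b))"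

definition seq_equiv :: "('o,'m,'e) etcat \<Rightarrow> 'm \<Rightarrow> 'm \<Rightarrow> 'm \<Rightarrow> 'm \<Rightarrow> bool" where
  "seq_equiv X x y x' y' \<longleftrightarrow> x' \<in> Mor X \<and> y' \<in> Mor X \<and>
     src X x' = src X x \<and> tgt X x' = src X y' \<and> tgt X y' = tgt X y \<and>
     (\<exists>b. iso X b \<and> src X b = tgt X x \<and> tgt X b = tgt X x' \<and>
          cmp X b x = x' \<and> cmp X y' b = y)"

text \<open>(ET2): s is an additive realization of E.\<close>
definition additive_realization :: "('o,'m,'e) etcat \<Rightarrow> bool" where
  "additive_realization X \<longleftrightarrow>
     \<comment> \<open>s(delta) is an equivalence class of sequences A -> B -> C\<close>
     (\<forall>d x y. real X d x y \<longrightarrow> d \<in> Ex X \<and> x \<in> Mor X \<and> y \<in> Mor X \<and>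
        src X x = eA X d \<and> tgt X x = src X y \<and> tgt X y = eC X d) \<and>
     (\<forall>d\<in>Ex X. \<exists>x y. real X d x y) \<and>
     (\<forall>d x y x' y'. real X d x y \<longrightarrow> (real X d x' y' \<longleftrightarrow> seq_equiv X x y x' y')) \<and>
     \<comment> \<open>realization condition\<close>
     (\<forall>d x y d' x' y' a c. real X d x y \<and> real X d' x' y' \<and>
        a \<in> Hom X (eA X d) (eA X d') \<and> c \<in> Hom X (eC X d) (eC X d') \<and>
        push X a d = pull X c d' \<longrightarrow>
        (\<exists>b\<in>Hom X (tgt X x) (tgt X x'). cmp X b x = cmp X x' a \<and> cmp X y' b = cmp X c y)) \<and>
     \<comment> \<open>s(0) = [A -> A (+) C -> C]\<close>
     (\<forall>A\<in>Ob X. \<forall>C\<in>Ob X. \<forall>S i1 i2 p1 p2. is_biprod X A C S i1 i2 p1 p2 \<longrightarrow>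
        real X (ezero X C A) i1 p2) \<and>
     \<comment> \<open>s(delta (+) delta') = s(delta) (+) s(delta')\<close>
     (\<forall>d x y d' x' y' SA iA iA' pA pA' SC jC jC' qC qC' SB kB kB' rB rB' e.
        real X d x y \<and> real X d' x' y' \<and>
        is_biprod X (eA X d) (eA X d') SA iA iA' pA pA' \<and>
        is_biprod X (eC X d) (eC X d') SC jC jC' qC qC' \<and>
        is_biprod X (tgt X x) (tgt X x') SB kB kB' rB rB' \<and>
        e \<in> E X SC SA \<and>
        push X pA (pull X jC e) = d \<and> push X pA' (pull X jC' e) = d' \<and>
        push X pA (pull X jC' e) = ezero X (eC X d') (eA X d) \<and>
        push X pA' (pull X jC e) = ezero X (eC X d) (eA X d') \<longrightarrow>
        real X e (madd X (cmp X kB (cmp X x pA)) (cmp X kB' (cmp X x' pA')))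
                 (madd X (cmp X jC (cmp X y rB)) (cmp X jC' (cmp X y' rB'))))"

definition tri_morph :: "('o,'m,'e) etcat \<Rightarrow> 'e \<Rightarrow> 'm \<Rightarrow> 'm \<Rightarrow> 'e \<Rightarrow> 'm \<Rightarrow> 'm \<Rightarrow> 'm \<Rightarrow> 'm \<Rightarrow> 'm \<Rightarrow> bool" where
  "tri_morph X d x y d' x' y' a b c \<longleftrightarrow>
     a \<in> Hom X (src X x) (src X x') \<and> b \<in> Hom X (tgt X x) (tgt X x') \<and>
     c \<in> Hom X (tgt X y) (tgt X y') \<and>
     cmp X b x = cmp X x' a \<and> cmp X y' b = cmp X c y \<and> push X a d = pull X c d'"

definition ET3 :: "('o,'m,'e) etcat \<Rightarrow> bool" where
  "ET3 X \<longleftrightarrow> (\<forall>d x y d' x' y' a b. real X d x y \<and> real X d' x' y' \<and>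
      a \<in> Hom X (src X x) (src X x') \<and> b \<in> Hom X (tgt X x) (tgt X x') \<and>
      cmp X b x = cmp X x' a \<longrightarrow>
      (\<exists>c. tri_morph X d x y d' x' y' a b c))"

definition ET3op :: "('o,'m,'e) etcat \<Rightarrow> bool" where
  "ET3op X \<longleftrightarrow> (\<forall>d x y d' x' y' b c. real X d x y \<and> real X d' x' y' \<and>
      b \<in> Hom X (tgt X x) (tgt X x') \<and> c \<in> Hom X (tgt X y) (tgt X y') \<and>
      cmp X y' b = cmp X c y \<longrightarrow>
      (\<exists>a. tri_morph X d x y d' x' y' a b c))"

definition ET4 :: "('o,'m,'e) etcat \<Rightarrow> bool" where
  "ET4 X \<longleftrightarrow> (\<forall>d f f' d' g g'. real X d f f' \<and> real X d' g g' \<and> tgt X f = src X g \<longrightarrow>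
      (\<exists>h' dd e d''. real X d'' (cmp X g f) h' \<and>
          dd \<in> Hom X (tgt X f') (tgt X h') \<and> e \<in> Hom X (tgt X h') (tgt X g') \<and>
          cmp X dd f' = cmp X h' g \<and> cmp X e h' = g' \<and>
          real X (push X f' d') dd e \<and>
          pull X dd d'' = d \<and> push X f d'' = pull X e d'))"

definition ET4op :: "('o,'m,'e) etcat \<Rightarrow> bool" where
  "ET4op X \<longleftrightarrow> (\<forall>d f' f d' g' g. real X d f' f \<and> real X d' g' g \<and> tgt X f = tgt X g' \<longrightarrow>
      (\<exists>h' dd e d''. real X d'' h' (cmp X g f) \<and>
          dd \<in> Hom X (src X f') (src X h') \<and> e \<in> Hom X (src X h') (src X g') \<and>
          cmp X h' dd = f' \<and> cmp X f h' = cmp X g' e \<and>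
          real X (pull X g' d) dd e \<and>
          d' = push X e d'' \<and> push X dd d = pull X g d''))"

definition extriangulated :: "('o,'m,'e) etcat \<Rightarrow> bool" where
  "extriangulated X \<longleftrightarrow> additive_cat X \<and> biadditive_E X \<and> additive_realization X \<and>
     ET3 X \<and> ET3op X \<and> ET4 X \<and> ET4op X"

definition inj_obj :: "('o,'m,'e) etcat \<Rightarrow> 'o \<Rightarrow> bool" where
  "inj_obj X I \<longleftrightarrow> I \<in> Ob X \<and> (\<forall>C\<in>Ob X. \<forall>d\<in>E X C I. d = ezero X C I)"

definition enough_inj_obj :: "('o,'m,'e) etcat \<Rightarrow> bool" where
  "enough_inj_obj X \<longleftrightarrow> (\<forall>A\<in>Ob X. \<exists>d x y. real X d x y \<and> src X x = A \<and> inj_obj X (tgt X x))"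

definition enough_proj_mor :: "('o,'m,'e) etcat \<Rightarrow> bool" where
  "enough_proj_mor X \<longleftrightarrow> (\<forall>C\<in>Ob X. \<exists>g k p. real X g k p \<and> tgt X p = C \<and>
      (\<forall>A\<in>Ob X. \<forall>d\<in>E X C A. pull X p d = ezero X (src X p) A))"

definition ideal :: "('o,'m,'e) etcat \<Rightarrow> 'm set \<Rightarrow> bool" where
  "ideal X I \<longleftrightarrow> I \<subseteq> Mor X \<and>
     (\<forall>A\<in>Ob X. \<forall>B\<in>Ob X. mzero X A B \<in> I) \<and>
     (\<forall>f\<in>I. \<forall>g\<in>I. src X f = src X g \<and> tgt X f = tgt X g \<longrightarrow> madd X f g \<in> I) \<and>
     (\<forall>f\<in>I. \<forall>g\<in>Mor X. tgt X f = src X g \<longrightarrow> cmp X g f \<in> I) \<and>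
     (\<forall>f\<in>I. \<forall>g\<in>Mor X. tgt X g = src X f \<longrightarrow> cmp X f g \<in> I)"

definition additive_subfunctor :: "('o,'m,'e) etcat \<Rightarrow> 'e set \<Rightarrow> bool" where
  "additive_subfunctor X F \<longleftrightarrow> F \<subseteq> Ex X \<and>
     (\<forall>C\<in>Ob X. \<forall>A\<in>Ob X. ezero X C A \<in> F) \<and>
     (\<forall>d\<in>F. \<forall>d'\<in>F. eC X d = eC X d' \<and> eA X d = eA X d' \<longrightarrow> eadd X d d' \<in> F) \<and>
     (\<forall>d\<in>F. eneg X d \<in> F) \<and>
     (\<forall>d\<in>F. \<forall>c\<in>Mor X. tgt X c = eC X d \<longrightarrow> pull X c d \<in> F) \<and>
     (\<forall>d\<in>F. \<forall>a\<in>Mor X. src X a = eA X d \<longrightarrow> push X a d \<in> F)"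

definition Ph :: "('o,'m,'e) etcat \<Rightarrow> 'e set \<Rightarrow> 'm set" where
  "Ph X F = {f \<in> Mor X. \<forall>d\<in>Ex X. eC X d = tgt X f \<longrightarrow> pull X f d \<in> F}"

definition F_inj :: "('o,'m,'e) etcat \<Rightarrow> 'e set \<Rightarrow> 'm set" where
  "F_inj X F = {i \<in> Mor X. \<forall>d\<in>F. eA X d = src X i \<longrightarrow> push X i d = ezero X (eC X d) (tgt X i)}"

definition star :: "('o,'m,'e) etcat \<Rightarrow> 'm set \<Rightarrow> 'e set" where
  "star X I = {e. \<exists>i\<in>I. \<exists>d\<in>Ex X. eC X d = tgt X i \<and> e = pull X i d}"

definition enough_inj_mor :: "('o,'m,'e) etcat \<Rightarrow> 'e set \<Rightarrow> bool" where
  "enough_inj_mor X F \<longleftrightarrow> (\<forall>A\<in>Ob X. \<exists>d e y. d \<in> F \<and> real X d e y \<and> src X e = A \<and> e \<in> F_inj X F)"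

definition enough_special_inj_mor :: "('o,'m,'e) etcat \<Rightarrow> 'e set \<Rightarrow> bool" where
  "enough_special_inj_mor X F \<longleftrightarrow> (\<forall>A\<in>Ob X. \<exists>d e y. d \<in> F \<and> real X d e y \<and> src X e = A \<and>
      e \<in> F_inj X F \<and>
      (\<exists>d' x' y' b \<phi>. real X d' x' y' \<and> src X x' = A \<and>
          tri_morph X d e y d' x' y' (idm X A) b \<phi> \<and> \<phi> \<in> Ph X F))"

definition perpR :: "('o,'m,'e) etcat \<Rightarrow> 'm set \<Rightarrow> 'm set" where
  "perpR X M = {g \<in> Mor X. \<forall>m\<in>M. \<forall>d\<in>Ex X. eC X d = tgt X m \<and> eA X d = src X g \<longrightarrow>
      pull X m (push X g d) = ezero X (src X m) (tgt X g)}"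

definition perpL :: "('o,'m,'e) etcat \<Rightarrow> 'm set \<Rightarrow> 'm set" where
  "perpL X M = {g \<in> Mor X. \<forall>m\<in>M. \<forall>d\<in>Ex X. eC X d = tgt X g \<and> eA X d = src X m \<longrightarrow>
      pull X g (push X m d) = ezero X (src X g) (tgt X m)}"

definition cotorsion_pair :: "('o,'m,'e) etcat \<Rightarrow> 'm set \<Rightarrow> 'm set \<Rightarrow> bool" where
  "cotorsion_pair X I J \<longleftrightarrow> I = perpL X J \<and> J = perpR X I"

definition special_precovering :: "('o,'m,'e) etcat \<Rightarrow> 'm set \<Rightarrow> bool" where
  "special_precovering X I \<longleftrightarrow> (\<forall>C\<in>Ob X. \<exists>i\<in>I. tgt X i = C \<and>
     (\<exists>d x y d' x' j b. real X d x y \<and> real X d' x' i \<and> tgt X y = C \<and>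
        tri_morph X d x y d' x' i j b (idm X C) \<and> j \<in> perpR X I))"

definition special_preenveloping :: "('o,'m,'e) etcat \<Rightarrow> 'm set \<Rightarrow> bool" where
  "special_preenveloping X J \<longleftrightarrow> (\<forall>A\<in>Ob X. \<exists>e\<in>J. src X e = A \<and>
     (\<exists>d y d' x' y' b j. real X d e y \<and> real X d' x' y' \<and> src X x' = A \<and>
        tri_morph X d e y d' x' y' (idm X A) b j \<and> j \<in> perpL X J))"

definition complete_cotorsion_pair :: "('o,'m,'e) etcat \<Rightarrow> 'm set \<Rightarrow> 'm set \<Rightarrow> bool" where
  "complete_cotorsion_pair X I J \<longleftrightarrow> cotorsion_pair X I J \<and>
     special_precovering X I \<and> special_preenveloping X J"

definition propC :: "('o,'m,'e) etcat \<Rightarrow> 'm set \<Rightarrow> bool" where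
  "propC X K \<longleftrightarrow> (\<forall>g x y d x' y' a b c. real X g x y \<and> real X d x' y' \<and> inj_obj X (tgt X y) \<and>
      tri_morph X g x y d x' y' a b c \<and> a \<in> K \<longrightarrow> b \<in> K)"

end

theory Submission
  imports Defs
begin

locale abgrp =
  fixes S :: "'a set" and add :: "'a \<Rightarrow> 'a \<Rightarrow> 'a" and neg :: "'a \<Rightarrow> 'a" and z :: 'a
  assumes cl: "x \<in> S \<Longrightarrow> y \<in> S \<Longrightarrow> add x y \<in> S"
    and ncl: "x \<in> S \<Longrightarrow> neg x \<in> S" and zcl: "z \<in> S"
    and assoc: "x \<in> S \<Longrightarrow> y \<in> S \<Longrightarrow> w \<in> S \<Longrightarrow> add (add x y) w = add x (add y w)"
    and comm: "x \<in> S \<Longrightarrow> y \<in> S \<Longrightarrow> add x y = add y x"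
    and lz: "x \<in> S \<Longrightarrow> add z x = x"
    and rinv: "x \<in> S \<Longrightarrow> add x (neg x) = z"
begin
lemma rz: "x \<in> S \<Longrightarrow> add x z = x" using comm lz zcl by metis
lemma linv: "x \<in> S \<Longrightarrow> add (neg x) x = z" using comm rinv ncl by metis
lemma idem_zero: assumes "x \<in> S" "add x x = x" shows "x = z"
proof -
  have "z = add x (neg x)" using rinv assms by simp
  also have "\<dots> = add (add x x) (neg x)" using assms by simp
  also have "\<dots> = add x z" using assoc[of x x "neg x"] rinv[of x] assms(1) ncl by simp
  finally show ?thesis using rz assms by simp
qed
lemma inv_unique: assumes "x \<in> S" "y \<in> S" "add x y = z" shows "y = neg x"
proof -
  have "y = add (add (neg x) x) y" using linv lz assms by simp
  also have "\<dots> = add (neg x) (add x y)" using assoc assms ncl by simp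
  finally show ?thesis using assms rz ncl by simp
qed
lemma neg_z: "neg z = z" using inv_unique[of z z] zcl lz by simp
lemma solve: assumes "x \<in> S" "y \<in> S" "w \<in> S" "add y (neg x) = w" shows "y = add x w"
proof -
  have "y = add y (add (neg x) x)" using linv rz assms by simp
  also have "\<dots> = add w x" using assoc[of y "neg x" x] assms ncl by simp
  finally show ?thesis using comm assms by simp
qed
lemma cancel_r: assumes "x \<in> S" "y \<in> S" "add (add y x) (neg x) = w" shows "w = y"
  using assms assoc rinv rz ncl by simp
lemma add_neg_left: assumes "x \<in> S" "y \<in> S" shows "add (neg x) (add x y) = y"
  using assms assoc[of "neg x" x y] linv lz ncl by simp
lemma neg_add_zero: assumes "x \<in> S" "y \<in> S" "add y x = z" shows "y = neg x"
  using inv_unique[of x y] assms comm by simp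
end


lemma Hom_iff: "f \<in> Hom X A B \<longleftrightarrow> f \<in> Mor X \<and> src X f = A \<and> tgt X f = B"
  by (simp add: Hom_def)
lemma E_iff: "d \<in> E X C A \<longleftrightarrow> d \<in> etcat.Ex X \<and> eC X d = C \<and> eA X d = A"
  by (simp add: E_def)

locale extri =
  fixes X :: "('o,'m,'e) etcat"
  assumes ext: "extriangulated X"
begin

lemma addc: "additive_cat X" using ext unfolding extriangulated_def by blast
lemma pre: "preadditive X" using addc unfolding additive_cat_def by blast
lemma iscat: "is_category X" using pre unfolding preadditive_def by blast
lemma bE: "biadditive_E X" using ext unfolding extriangulated_def by blast
lemma ar: "additive_realization X" using ext unfolding extriangulated_def by blast
lemma et3: "ET3 X" using ext unfolding extriangulated_def by blast
lemma et3op: "ET3op X" using ext unfolding extriangulated_def by blast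
lemma et4: "ET4 X" using ext unfolding extriangulated_def by blast
lemma et4op: "ET4op X" using ext unfolding extriangulated_def by blast

lemma mor_src: "f \<in> Mor X \<Longrightarrow> src X f \<in> Ob X" using iscat unfolding is_category_def by blast
lemma mor_tgt: "f \<in> Mor X \<Longrightarrow> tgt X f \<in> Ob X" using iscat unfolding is_category_def by blast
lemma mor_hom: "f \<in> Mor X \<Longrightarrow> f \<in> Hom X (src X f) (tgt X f)" by (simp add: Hom_iff)
lemma hom_mor: "f \<in> Hom X A B \<Longrightarrow> f \<in> Mor X" by (simp add: Hom_iff)
lemma hom_src: "f \<in> Hom X A B \<Longrightarrow> src X f = A" by (simp add: Hom_iff)
lemma hom_tgt: "f \<in> Hom X A B \<Longrightarrow> tgt X f = B" by (simp add: Hom_iff)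
lemma hom_obs: "f \<in> Hom X A B \<Longrightarrow> A \<in> Ob X" "f \<in> Hom X A B \<Longrightarrow> B \<in> Ob X"
  by (metis Hom_iff mor_src) (metis Hom_iff mor_tgt)
lemma idm_hom: "A \<in> Ob X \<Longrightarrow> idm X A \<in> Hom X A A" using iscat unfolding is_category_def by blast
lemma cat_cmp0: "\<forall>f\<in>Mor X. \<forall>g\<in>Mor X. tgt X f = src X g \<longrightarrow> cmp X g f \<in> Hom X (src X f) (tgt X g)"
  using iscat unfolding is_category_def by blast
lemma cat_assoc0: "\<forall>f\<in>Mor X. \<forall>g\<in>Mor X. \<forall>h\<in>Mor X. tgt X f = src X g \<and> tgt X g = src X h \<longrightarrow>
        cmp X h (cmp X g f) = cmp X (cmp X h g) f"
  using iscat unfolding is_category_def by blast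
lemma cat_id0: "\<forall>f\<in>Mor X. cmp X (idm X (tgt X f)) f = f \<and> cmp X f (idm X (src X f)) = f"
  using iscat unfolding is_category_def by blast
lemma cmp_hom: "f \<in> Hom X A B \<Longrightarrow> g \<in> Hom X B C \<Longrightarrow> cmp X g f \<in> Hom X A C"
  using cat_cmp0 unfolding Hom_iff by simp
lemma cmp_assoc: "f \<in> Hom X A B \<Longrightarrow> g \<in> Hom X B C \<Longrightarrow> h \<in> Hom X C D \<Longrightarrow>
   cmp X h (cmp X g f) = cmp X (cmp X h g) f"
  using cat_assoc0 unfolding Hom_iff by simp
lemma id_l: "f \<in> Hom X A B \<Longrightarrow> cmp X (idm X B) f = f"
  using cat_id0 unfolding Hom_iff by auto
lemma id_r: "f \<in> Hom X A B \<Longrightarrow> cmp X f (idm X A) = f"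
  using cat_id0 unfolding Hom_iff by auto

lemma pre': "A \<in> Ob X \<Longrightarrow> B \<in> Ob X \<Longrightarrow>
        mzero X A B \<in> Hom X A B \<and>
        (\<forall>f\<in>Hom X A B. \<forall>g\<in>Hom X A B. madd X f g \<in> Hom X A B) \<and>
        (\<forall>f\<in>Hom X A B. mneg X f \<in> Hom X A B) \<and>
        (\<forall>f\<in>Hom X A B. \<forall>g\<in>Hom X A B. \<forall>h\<in>Hom X A B.
            madd X (madd X f g) h = madd X f (madd X g h)) \<and>
        (\<forall>f\<in>Hom X A B. \<forall>g\<in>Hom X A B. madd X f g = madd X g f) \<and>
        (\<forall>f\<in>Hom X A B. madd X (mzero X A B) f = f) \<and>
        (\<forall>f\<in>Hom X A B. madd X f (mneg X f) = mzero X A B) \<and>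
        (\<forall>f\<in>Hom X A B. \<forall>g\<in>Hom X A B. \<forall>h\<in>Mor X. src X h = B \<longrightarrow>
            cmp X h (madd X f g) = madd X (cmp X h f) (cmp X h g)) \<and>
        (\<forall>f\<in>Hom X A B. \<forall>g\<in>Hom X A B. \<forall>h\<in>Mor X. tgt X h = A \<longrightarrow>
            cmp X (madd X f g) h = madd X (cmp X f h) (cmp X g h))"
  using pre unfolding preadditive_def by blast

lemma hom_grp: assumes "A \<in> Ob X" "B \<in> Ob X" shows "abgrp (Hom X A B) (madd X) (mneg X) (mzero X A B)"
proof (unfold_locales)
  note P = pre'[OF assms]
  show "\<And>x y. x \<in> Hom X A B \<Longrightarrow> y \<in> Hom X A B \<Longrightarrow> madd X x y \<in> Hom X A B" using P by blast
  show "\<And>x. x \<in> Hom X A B \<Longrightarrow> mneg X x \<in> Hom X A B" using P by blast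
  show "mzero X A B \<in> Hom X A B" using P by blast
  show "\<And>x y w. x \<in> Hom X A B \<Longrightarrow> y \<in> Hom X A B \<Longrightarrow> w \<in> Hom X A B \<Longrightarrow>
     madd X (madd X x y) w = madd X x (madd X y w)" using P by blast
  show "\<And>x y. x \<in> Hom X A B \<Longrightarrow> y \<in> Hom X A B \<Longrightarrow> madd X x y = madd X y x" using P by blast
  show "\<And>x. x \<in> Hom X A B \<Longrightarrow> madd X (mzero X A B) x = x" using P by blast
  show "\<And>x. x \<in> Hom X A B \<Longrightarrow> madd X x (mneg X x) = mzero X A B" using P by blast
qed

lemma mzero_hom: "A \<in> Ob X \<Longrightarrow> B \<in> Ob X \<Longrightarrow> mzero X A B \<in> Hom X A B" using abgrp.zcl[OF hom_grp] .
lemma madd_hom: "f \<in> Hom X A B \<Longrightarrow> g \<in> Hom X A B \<Longrightarrow> madd X f g \<in> Hom X A B"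
  using abgrp.cl[OF hom_grp[OF hom_obs]] .
lemma mneg_hom: "f \<in> Hom X A B \<Longrightarrow> mneg X f \<in> Hom X A B"
  using abgrp.ncl[OF hom_grp[OF hom_obs]] .
lemma cmp_madd_l: "f \<in> Hom X A B \<Longrightarrow> g \<in> Hom X A B \<Longrightarrow> h \<in> Hom X B C \<Longrightarrow>
   cmp X h (madd X f g) = madd X (cmp X h f) (cmp X h g)"
proof -
  assume a: "f \<in> Hom X A B" "g \<in> Hom X A B" "h \<in> Hom X B C"
  have "\<forall>f\<in>Hom X A B. \<forall>g\<in>Hom X A B. \<forall>h\<in>Mor X. src X h = B \<longrightarrow>
            cmp X h (madd X f g) = madd X (cmp X h f) (cmp X h g)" using pre'[OF hom_obs[OF a(1)]] by blast
  then show ?thesis using a by (simp add: Hom_iff)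
qed
lemma cmp_madd_r: "f \<in> Hom X A B \<Longrightarrow> g \<in> Hom X A B \<Longrightarrow> h \<in> Hom X C A \<Longrightarrow>
   cmp X (madd X f g) h = madd X (cmp X f h) (cmp X g h)"
proof -
  assume a: "f \<in> Hom X A B" "g \<in> Hom X A B" "h \<in> Hom X C A"
  have "\<forall>f\<in>Hom X A B. \<forall>g\<in>Hom X A B. \<forall>h\<in>Mor X. tgt X h = A \<longrightarrow>
            cmp X (madd X f g) h = madd X (cmp X f h) (cmp X g h)" using pre'[OF hom_obs[OF a(1)]] by blast
  then show ?thesis using a by (simp add: Hom_iff)
qed

lemma cmp_mzero_l: assumes "f \<in> Hom X A B" "C \<in> Ob X" shows "cmp X (mzero X B C) f = mzero X A C"
proof -
  have A: "A \<in> Ob X" "B \<in> Ob X" using assms hom_obs by auto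
  interpret G: abgrp "Hom X A C" "madd X" "mneg X" "mzero X A C" using hom_grp A assms by simp
  interpret H: abgrp "Hom X B C" "madd X" "mneg X" "mzero X B C" using hom_grp A assms by simp
  have z: "mzero X B C \<in> Hom X B C" by (rule H.zcl)
  have "cmp X (mzero X B C) f = cmp X (madd X (mzero X B C) (mzero X B C)) f"
    using H.lz[OF z] by simp
  also have "\<dots> = madd X (cmp X (mzero X B C) f) (cmp X (mzero X B C) f)"
    using cmp_madd_r[OF z z assms(1)] .
  finally show ?thesis by (metis G.idem_zero[OF cmp_hom[OF assms(1) z]])
qed

lemma cmp_mzero_r: assumes "g \<in> Hom X B C" "A \<in> Ob X" shows "cmp X g (mzero X A B) = mzero X A C"
proof -
  have A: "B \<in> Ob X" "C \<in> Ob X" using assms hom_obs by auto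
  interpret G: abgrp "Hom X A C" "madd X" "mneg X" "mzero X A C" using hom_grp A assms by simp
  interpret H: abgrp "Hom X A B" "madd X" "mneg X" "mzero X A B" using hom_grp A assms by simp
  have z: "mzero X A B \<in> Hom X A B" by (rule H.zcl)
  have "cmp X g (mzero X A B) = cmp X g (madd X (mzero X A B) (mzero X A B))"
    using H.lz[OF z] by simp
  also have "\<dots> = madd X (cmp X g (mzero X A B)) (cmp X g (mzero X A B))"
    using cmp_madd_l[OF z z assms(1)] .
  finally show ?thesis by (metis G.idem_zero[OF cmp_hom[OF z assms(1)]])
qed

lemma cmp_mneg_l: assumes "f \<in> Hom X A B" "g \<in> Hom X B C"
  shows "cmp X (mneg X g) f = mneg X (cmp X g f)"
proof -
  have A: "A \<in> Ob X" "B \<in> Ob X" "C \<in> Ob X" using assms hom_obs by auto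
  interpret G: abgrp "Hom X A C" "madd X" "mneg X" "mzero X A C" using hom_grp A by simp
  interpret H: abgrp "Hom X B C" "madd X" "mneg X" "mzero X B C" using hom_grp A by simp
  have "madd X (cmp X g f) (cmp X (mneg X g) f) = cmp X (madd X g (mneg X g)) f"
    using cmp_madd_r[OF assms(2) H.ncl[OF assms(2)] assms(1)] by simp
  also have "\<dots> = mzero X A C" using H.rinv[OF assms(2)] cmp_mzero_l[OF assms(1) A(3)] by simp
  finally show ?thesis by (rule G.inv_unique[OF cmp_hom[OF assms] cmp_hom[OF assms(1) H.ncl[OF assms(2)]]])
qed

lemma cmp_mneg_r: assumes "f \<in> Hom X A B" "g \<in> Hom X B C"
  shows "cmp X g (mneg X f) = mneg X (cmp X g f)"
proof -
  have A: "A \<in> Ob X" "B \<in> Ob X" "C \<in> Ob X" using assms hom_obs by auto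
  interpret G: abgrp "Hom X A C" "madd X" "mneg X" "mzero X A C" using hom_grp A by simp
  interpret H: abgrp "Hom X A B" "madd X" "mneg X" "mzero X A B" using hom_grp A by simp
  have "madd X (cmp X g f) (cmp X g (mneg X f)) = cmp X g (madd X f (mneg X f))"
    using cmp_madd_l[OF assms(1) H.ncl[OF assms(1)] assms(2)] by simp
  also have "\<dots> = mzero X A C" using H.rinv[OF assms(1)] cmp_mzero_r[OF assms(2) A(1)] by simp
  finally show ?thesis by (rule G.inv_unique[OF cmp_hom[OF assms] cmp_hom[OF H.ncl[OF assms(1)] assms(2)]])
qed

end

context extri begin

lemma bE_p1:
  "\<forall>d\<in>etcat.Ex X. eC X d \<in> Ob X \<and> eA X d \<in> Ob X"
  by (insert bE, unfold biadditive_E_def, elim conjE, assumption)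
lemma bE_p2:
  "\<forall>C\<in>Ob X. \<forall>A\<in>Ob X.
        ezero X C A \<in> E X C A \<and>
        (\<forall>d\<in>E X C A. \<forall>d'\<in>E X C A. eadd X d d' \<in> E X C A) \<and>
        (\<forall>d\<in>E X C A. eneg X d \<in> E X C A) \<and>
        (\<forall>d\<in>E X C A. \<forall>d'\<in>E X C A. \<forall>d''\<in>E X C A.
            eadd X (eadd X d d') d'' = eadd X d (eadd X d' d'')) \<and>
        (\<forall>d\<in>E X C A. \<forall>d'\<in>E X C A. eadd X d d' = eadd X d' d) \<and>
        (\<forall>d\<in>E X C A. eadd X (ezero X C A) d = d) \<and>
        (\<forall>d\<in>E X C A. eadd X d (eneg X d) = ezero X C A)"
  by (insert bE, unfold biadditive_E_def, elim conjE, assumption)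
lemma bE_p3:
  "\<forall>d\<in>etcat.Ex X. \<forall>c\<in>Mor X. tgt X c = eC X d \<longrightarrow> pull X c d \<in> E X (src X c) (eA X d)"
  by (insert bE, unfold biadditive_E_def, elim conjE, assumption)
lemma bE_p4:
  "\<forall>d\<in>etcat.Ex X. \<forall>a\<in>Mor X. src X a = eA X d \<longrightarrow> push X a d \<in> E X (eC X d) (tgt X a)"
  by (insert bE, unfold biadditive_E_def, elim conjE, assumption)
lemma bE_p5:
  "\<forall>d\<in>etcat.Ex X. pull X (idm X (eC X d)) d = d \<and> push X (idm X (eA X d)) d = d"
  by (insert bE, unfold biadditive_E_def, elim conjE, assumption)
lemma bE_p6:
  "\<forall>d\<in>etcat.Ex X. \<forall>c\<in>Mor X. \<forall>c'\<in>Mor X. tgt X c = eC X d \<and> tgt X c' = src X c \<longrightarrow>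
        pull X (cmp X c c') d = pull X c' (pull X c d)"
  by (insert bE, unfold biadditive_E_def, elim conjE, assumption)
lemma bE_p7:
  "\<forall>d\<in>etcat.Ex X. \<forall>a\<in>Mor X. \<forall>a'\<in>Mor X. src X a = eA X d \<and> src X a' = tgt X a \<longrightarrow>
        push X (cmp X a' a) d = push X a' (push X a d)"
  by (insert bE, unfold biadditive_E_def, elim conjE, assumption)
lemma bE_p8:
  "\<forall>d\<in>etcat.Ex X. \<forall>a\<in>Mor X. \<forall>c\<in>Mor X. src X a = eA X d \<and> tgt X c = eC X d \<longrightarrow>
        push X a (pull X c d) = pull X c (push X a d)"
  by (insert bE, unfold biadditive_E_def, elim conjE, assumption)
lemma bE_p9:
  "\<forall>d\<in>etcat.Ex X. \<forall>d'\<in>etcat.Ex X. \<forall>c\<in>Mor X. eC X d' = eC X d \<and> eA X d' = eA X d \<and> tgt X c = eC X d \<longrightarrow>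
        pull X c (eadd X d d') = eadd X (pull X c d) (pull X c d')"
  by (insert bE, unfold biadditive_E_def, elim conjE, assumption)
lemma bE_p10:
  "\<forall>d\<in>etcat.Ex X. \<forall>d'\<in>etcat.Ex X. \<forall>a\<in>Mor X. eC X d' = eC X d \<and> eA X d' = eA X d \<and> src X a = eA X d \<longrightarrow>
        push X a (eadd X d d') = eadd X (push X a d) (push X a d')"
  by (insert bE, unfold biadditive_E_def, elim conjE, assumption)
lemma bE_p11:
  "\<forall>d\<in>etcat.Ex X. \<forall>c\<in>Mor X. \<forall>c'\<in>Mor X. tgt X c = eC X d \<and> tgt X c' = eC X d \<and> src X c' = src X c \<longrightarrow>
        pull X (madd X c c') d = eadd X (pull X c d) (pull X c' d)"
  by (insert bE, unfold biadditive_E_def, elim conjE, assumption)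
lemma bE_p12:
  "\<forall>d\<in>etcat.Ex X. \<forall>a\<in>Mor X. \<forall>a'\<in>Mor X. src X a = eA X d \<and> src X a' = eA X d \<and> tgt X a' = tgt X a \<longrightarrow>
        push X (madd X a a') d = eadd X (push X a d) (push X a' d)"
  by (insert bE, unfold biadditive_E_def, elim conjE, assumption)


lemma E_obs: "d \<in> E X C A \<Longrightarrow> C \<in> Ob X" "d \<in> E X C A \<Longrightarrow> A \<in> Ob X"
  using bE_p1 by (auto simp: E_iff)
lemma E_ex: "d \<in> E X C A \<Longrightarrow> d \<in> etcat.Ex X" by (simp add: E_iff)
lemma ex_E: "d \<in> etcat.Ex X \<Longrightarrow> d \<in> E X (eC X d) (eA X d)" by (simp add: E_iff)

lemma E_grp: assumes "C \<in> Ob X" "A \<in> Ob X" shows "abgrp (E X C A) (eadd X) (eneg X) (ezero X C A)"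
proof (unfold_locales)
  note P = bE_p2[rule_format, OF assms]
  show "\<And>x y. x \<in> E X C A \<Longrightarrow> y \<in> E X C A \<Longrightarrow> eadd X x y \<in> E X C A" using P by blast
  show "\<And>x. x \<in> E X C A \<Longrightarrow> eneg X x \<in> E X C A" using P by blast
  show "ezero X C A \<in> E X C A" using P by blast
  show "\<And>x y w. x \<in> E X C A \<Longrightarrow> y \<in> E X C A \<Longrightarrow> w \<in> E X C A \<Longrightarrow>
     eadd X (eadd X x y) w = eadd X x (eadd X y w)" using P by blast
  show "\<And>x y. x \<in> E X C A \<Longrightarrow> y \<in> E X C A \<Longrightarrow> eadd X x y = eadd X y x" using P by blast
  show "\<And>x. x \<in> E X C A \<Longrightarrow> eadd X (ezero X C A) x = x" using P by blast
  show "\<And>x. x \<in> E X C A \<Longrightarrow> eadd X x (eneg X x) = ezero X C A" using P by blast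
qed

lemma ezero_E: "C \<in> Ob X \<Longrightarrow> A \<in> Ob X \<Longrightarrow> ezero X C A \<in> E X C A" using abgrp.zcl[OF E_grp] .
lemma eadd_E: "d \<in> E X C A \<Longrightarrow> d' \<in> E X C A \<Longrightarrow> eadd X d d' \<in> E X C A"
  using abgrp.cl[OF E_grp[OF E_obs]] .
lemma eneg_E: "d \<in> E X C A \<Longrightarrow> eneg X d \<in> E X C A"
  using abgrp.ncl[OF E_grp[OF E_obs]] .

lemma pull_E: "d \<in> E X C A \<Longrightarrow> c \<in> Hom X W C \<Longrightarrow> pull X c d \<in> E X W A"
  using bE_p3 by (auto simp: E_iff Hom_iff)
lemma push_E: "d \<in> E X C A \<Longrightarrow> a \<in> Hom X A B \<Longrightarrow> push X a d \<in> E X C B"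
  using bE_p4 by (auto simp: E_iff Hom_iff)
lemma pull_id: "d \<in> E X C A \<Longrightarrow> pull X (idm X C) d = d"
  using bE_p5 by (auto simp: E_iff)
lemma push_id: "d \<in> E X C A \<Longrightarrow> push X (idm X A) d = d"
  using bE_p5 by (auto simp: E_iff)
lemma pull_cmp: "d \<in> E X C A \<Longrightarrow> c \<in> Hom X W C \<Longrightarrow> c' \<in> Hom X V W \<Longrightarrow>
   pull X (cmp X c c') d = pull X c' (pull X c d)"
  using bE_p6 by (auto simp: E_iff Hom_iff)
lemma push_cmp: "d \<in> E X C A \<Longrightarrow> a \<in> Hom X A B \<Longrightarrow> a' \<in> Hom X B B' \<Longrightarrow>
   push X (cmp X a' a) d = push X a' (push X a d)"
  using bE_p7 by (auto simp: E_iff Hom_iff)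
lemma push_pull: "d \<in> E X C A \<Longrightarrow> a \<in> Hom X A B \<Longrightarrow> c \<in> Hom X W C \<Longrightarrow>
   push X a (pull X c d) = pull X c (push X a d)"
  using bE_p8 by (auto simp: E_iff Hom_iff)
lemma pull_eadd: "d \<in> E X C A \<Longrightarrow> d' \<in> E X C A \<Longrightarrow> c \<in> Hom X W C \<Longrightarrow>
   pull X c (eadd X d d') = eadd X (pull X c d) (pull X c d')"
  using bE_p9 by (auto simp: E_iff Hom_iff)
lemma push_eadd: "d \<in> E X C A \<Longrightarrow> d' \<in> E X C A \<Longrightarrow> a \<in> Hom X A B \<Longrightarrow>
   push X a (eadd X d d') = eadd X (push X a d) (push X a d')"
  using bE_p10 by (auto simp: E_iff Hom_iff)
lemma pull_madd: "d \<in> E X C A \<Longrightarrow> c \<in> Hom X W C \<Longrightarrow> c' \<in> Hom X W C \<Longrightarrow>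
   pull X (madd X c c') d = eadd X (pull X c d) (pull X c' d)"
  using bE_p11 by (auto simp: E_iff Hom_iff)
lemma push_madd: "d \<in> E X C A \<Longrightarrow> a \<in> Hom X A B \<Longrightarrow> a' \<in> Hom X A B \<Longrightarrow>
   push X (madd X a a') d = eadd X (push X a d) (push X a' d)"
  using bE_p12 by (auto simp: E_iff Hom_iff)

lemma pull_ezero: assumes "c \<in> Hom X W C" "A \<in> Ob X" shows "pull X c (ezero X C A) = ezero X W A"
proof -
  have O: "W \<in> Ob X" "C \<in> Ob X" using hom_obs assms by auto
  interpret G: abgrp "E X W A" "eadd X" "eneg X" "ezero X W A" using E_grp O assms by simp
  interpret H: abgrp "E X C A" "eadd X" "eneg X" "ezero X C A" using E_grp O assms by simp
  have "pull X c (ezero X C A) = pull X c (eadd X (ezero X C A) (ezero X C A))" using H.lz H.zcl by simp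
  also have "\<dots> = eadd X (pull X c (ezero X C A)) (pull X c (ezero X C A))"
    using pull_eadd[OF H.zcl H.zcl assms(1)] .
  finally show ?thesis by (metis G.idem_zero pull_E[OF H.zcl assms(1)])
qed
lemma push_ezero: assumes "a \<in> Hom X A B" "C \<in> Ob X" shows "push X a (ezero X C A) = ezero X C B"
proof -
  have O: "A \<in> Ob X" "B \<in> Ob X" using hom_obs assms by auto
  interpret G: abgrp "E X C B" "eadd X" "eneg X" "ezero X C B" using E_grp O assms by simp
  interpret H: abgrp "E X C A" "eadd X" "eneg X" "ezero X C A" using E_grp O assms by simp
  have "push X a (ezero X C A) = push X a (eadd X (ezero X C A) (ezero X C A))" using H.lz H.zcl by simp
  also have "\<dots> = eadd X (push X a (ezero X C A)) (push X a (ezero X C A))"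
    using push_eadd[OF H.zcl H.zcl assms(1)] .
  finally show ?thesis by (metis G.idem_zero push_E[OF H.zcl assms(1)])
qed
lemma pull_mzero: assumes "d \<in> E X C A" "W \<in> Ob X" shows "pull X (mzero X W C) d = ezero X W A"
proof -
  have O: "C \<in> Ob X" "A \<in> Ob X" using E_obs assms by auto
  interpret G: abgrp "E X W A" "eadd X" "eneg X" "ezero X W A" using E_grp O assms by simp
  interpret H: abgrp "Hom X W C" "madd X" "mneg X" "mzero X W C" using hom_grp O assms by simp
  have "pull X (mzero X W C) d = pull X (madd X (mzero X W C) (mzero X W C)) d" using H.lz H.zcl by simp
  also have "\<dots> = eadd X (pull X (mzero X W C) d) (pull X (mzero X W C) d)"
    using pull_madd[OF assms(1) H.zcl H.zcl] .
  finally show ?thesis by (metis G.idem_zero pull_E[OF assms(1) H.zcl])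
qed
lemma push_mzero: assumes "d \<in> E X C A" "B \<in> Ob X" shows "push X (mzero X A B) d = ezero X C B"
proof -
  have O: "C \<in> Ob X" "A \<in> Ob X" using E_obs assms by auto
  interpret G: abgrp "E X C B" "eadd X" "eneg X" "ezero X C B" using E_grp O assms by simp
  interpret H: abgrp "Hom X A B" "madd X" "mneg X" "mzero X A B" using hom_grp O assms by simp
  have "push X (mzero X A B) d = push X (madd X (mzero X A B) (mzero X A B)) d" using H.lz H.zcl by simp
  also have "\<dots> = eadd X (push X (mzero X A B) d) (push X (mzero X A B) d)"
    using push_madd[OF assms(1) H.zcl H.zcl] .
  finally show ?thesis by (metis G.idem_zero push_E[OF assms(1) H.zcl])
qed

lemma pull_eneg: assumes "d \<in> E X C A" "c \<in> Hom X W C" shows "pull X c (eneg X d) = eneg X (pull X c d)"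
proof -
  have O: "C \<in> Ob X" "A \<in> Ob X" "W \<in> Ob X" using E_obs hom_obs assms by auto
  interpret G: abgrp "E X W A" "eadd X" "eneg X" "ezero X W A" using E_grp O by simp
  interpret H: abgrp "E X C A" "eadd X" "eneg X" "ezero X C A" using E_grp O by simp
  have "eadd X (pull X c d) (pull X c (eneg X d)) = pull X c (eadd X d (eneg X d))"
    using pull_eadd[OF assms(1) H.ncl[OF assms(1)] assms(2)] by simp
  also have "\<dots> = ezero X W A" using H.rinv[OF assms(1)] pull_ezero[OF assms(2) O(2)] by simp
  finally show ?thesis by (rule G.inv_unique[OF pull_E[OF assms(1,2)] pull_E[OF H.ncl[OF assms(1)] assms(2)]])
qed
lemma push_eneg: assumes "d \<in> E X C A" "a \<in> Hom X A B" shows "push X a (eneg X d) = eneg X (push X a d)"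
proof -
  have O: "C \<in> Ob X" "A \<in> Ob X" "B \<in> Ob X" using E_obs hom_obs assms by auto
  interpret G: abgrp "E X C B" "eadd X" "eneg X" "ezero X C B" using E_grp O by simp
  interpret H: abgrp "E X C A" "eadd X" "eneg X" "ezero X C A" using E_grp O by simp
  have "eadd X (push X a d) (push X a (eneg X d)) = push X a (eadd X d (eneg X d))"
    using push_eadd[OF assms(1) H.ncl[OF assms(1)] assms(2)] by simp
  also have "\<dots> = ezero X C B" using H.rinv[OF assms(1)] push_ezero[OF assms(2) O(1)] by simp
  finally show ?thesis by (rule G.inv_unique[OF push_E[OF assms(1,2)] push_E[OF H.ncl[OF assms(1)] assms(2)]])
qed
lemma push_mneg: assumes "d \<in> E X C A" "a \<in> Hom X A B" shows "push X (mneg X a) d = eneg X (push X a d)"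
proof -
  have O: "C \<in> Ob X" "A \<in> Ob X" "B \<in> Ob X" using E_obs hom_obs assms by auto
  interpret G: abgrp "E X C B" "eadd X" "eneg X" "ezero X C B" using E_grp O by simp
  interpret H: abgrp "Hom X A B" "madd X" "mneg X" "mzero X A B" using hom_grp O by simp
  have "eadd X (push X a d) (push X (mneg X a) d) = push X (madd X a (mneg X a)) d"
    using push_madd[OF assms(1) assms(2) H.ncl[OF assms(2)]] by simp
  also have "\<dots> = ezero X C B" using H.rinv[OF assms(2)] push_mzero[OF assms(1) O(3)] by simp
  finally show ?thesis by (rule G.inv_unique[OF push_E[OF assms(1,2)] push_E[OF assms(1) H.ncl[OF assms(2)]]])
qed
lemma pull_mneg: assumes "d \<in> E X C A" "c \<in> Hom X W C" shows "pull X (mneg X c) d = eneg X (pull X c d)"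
proof -
  have O: "C \<in> Ob X" "A \<in> Ob X" "W \<in> Ob X" using E_obs hom_obs assms by auto
  interpret G: abgrp "E X W A" "eadd X" "eneg X" "ezero X W A" using E_grp O by simp
  interpret H: abgrp "Hom X W C" "madd X" "mneg X" "mzero X W C" using hom_grp O by simp
  have "eadd X (pull X c d) (pull X (mneg X c) d) = pull X (madd X c (mneg X c)) d"
    using pull_madd[OF assms(1) assms(2) H.ncl[OF assms(2)]] by simp
  also have "\<dots> = ezero X W A" using H.rinv[OF assms(2)] pull_mzero[OF assms(1) O(3)] by simp
  finally show ?thesis by (rule G.inv_unique[OF pull_E[OF assms(1,2)] pull_E[OF assms(1) H.ncl[OF assms(2)]]])
qed

end

context extri begin

lemma ar_p1: "real X d x y \<Longrightarrow> d \<in> etcat.Ex X \<and> x \<in> Mor X \<and> y \<in> Mor X \<and>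
        src X x = eA X d \<and> tgt X x = src X y \<and> tgt X y = eC X d"
  by (insert ar, unfold additive_realization_def, elim conjE, blast)
lemma ar_p2: "d \<in> etcat.Ex X \<Longrightarrow> \<exists>x y. real X d x y"
  by (insert ar, unfold additive_realization_def, elim conjE, blast)
lemma ar_p4: "real X d x y \<Longrightarrow> real X d' x' y' \<Longrightarrow>
        a \<in> Hom X (eA X d) (eA X d') \<Longrightarrow> c \<in> Hom X (eC X d) (eC X d') \<Longrightarrow>
        push X a d = pull X c d' \<Longrightarrow>
        (\<exists>b\<in>Hom X (tgt X x) (tgt X x'). cmp X b x = cmp X x' a \<and> cmp X y' b = cmp X c y)"
  by (insert ar, unfold additive_realization_def, elim conjE, blast)
lemma ar_p5': "\<forall>A\<in>Ob X. \<forall>C\<in>Ob X. \<forall>S i1 i2 p1 p2. is_biprod X A C S i1 i2 p1 p2 \<longrightarrow>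
        real X (ezero X C A) i1 p2"
  by (insert ar, unfold additive_realization_def, elim conjE, assumption)
lemma ar_p5: "A \<in> Ob X \<Longrightarrow> C \<in> Ob X \<Longrightarrow> is_biprod X A C S i1 i2 p1 p2 \<Longrightarrow>
        real X (ezero X C A) i1 p2"
  using ar_p5' by blast

lemma ET3r: "real X d x y \<Longrightarrow> real X d' x' y' \<Longrightarrow>
      a \<in> Hom X (src X x) (src X x') \<Longrightarrow> b \<in> Hom X (tgt X x) (tgt X x') \<Longrightarrow>
      cmp X b x = cmp X x' a \<Longrightarrow> (\<exists>c. tri_morph X d x y d' x' y' a b c)"
  using et3 unfolding ET3_def by blast
lemma ET3opr: "real X d x y \<Longrightarrow> real X d' x' y' \<Longrightarrow>
      b \<in> Hom X (tgt X x) (tgt X x') \<Longrightarrow> c \<in> Hom X (tgt X y) (tgt X y') \<Longrightarrow>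
      cmp X y' b = cmp X c y \<Longrightarrow> (\<exists>a. tri_morph X d x y d' x' y' a b c)"
  using et3op unfolding ET3op_def by blast

lemma real_E: "real X d x y \<Longrightarrow> d \<in> E X (tgt X y) (src X x)"
  using ar_p1 by (simp add: E_iff)
lemma real_x: "real X d x y \<Longrightarrow> x \<in> Hom X (src X x) (src X y)"
  using ar_p1 by (simp add: Hom_iff)
lemma real_y: "real X d x y \<Longrightarrow> y \<in> Hom X (tgt X x) (tgt X y)"
  using ar_p1 by (simp add: Hom_iff)
lemma real_eA: "real X d x y \<Longrightarrow> eA X d = src X x" using ar_p1 by simp
lemma real_eC: "real X d x y \<Longrightarrow> eC X d = tgt X y" using ar_p1 by simp
lemma real_mid: "real X d x y \<Longrightarrow> tgt X x = src X y" using ar_p1 by simp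
lemma real_in: "real X d x y \<Longrightarrow> d \<in> E X C A \<Longrightarrow> x \<in> Hom X A (tgt X x) \<and> y \<in> Hom X (tgt X x) C"
  using ar_p1 by (simp add: Hom_iff E_iff)

lemma zero_ex: "\<exists>Z. zero_obj X Z" using addc unfolding additive_cat_def by blast
lemma biprod_ex: "A \<in> Ob X \<Longrightarrow> B \<in> Ob X \<Longrightarrow> \<exists>S i1 i2 p1 p2. is_biprod X A B S i1 i2 p1 p2"
  using addc unfolding additive_cat_def by blast
lemma zo_ob: "zero_obj X Z \<Longrightarrow> Z \<in> Ob X" unfolding zero_obj_def by blast
lemma zo_from: assumes "zero_obj X Z" "f \<in> Hom X Z B" shows "f = mzero X Z B"
proof -
  have "B \<in> Ob X" using assms hom_obs by auto
  then have "\<exists>!f. f \<in> Hom X Z B" using assms(1) unfolding zero_obj_def by blast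
  moreover have "mzero X Z B \<in> Hom X Z B" using mzero_hom zo_ob assms \<open>B \<in> Ob X\<close> by blast
  ultimately show ?thesis using assms(2) by blast
qed
lemma zo_to: assumes "zero_obj X Z" "f \<in> Hom X A Z" shows "f = mzero X A Z"
proof -
  have "A \<in> Ob X" using assms hom_obs by auto
  then have "\<exists>!f. f \<in> Hom X A Z" using assms(1) unfolding zero_obj_def by blast
  moreover have "mzero X A Z \<in> Hom X A Z" using mzero_hom zo_ob assms \<open>A \<in> Ob X\<close> by blast
  ultimately show ?thesis using assms(2) by blast
qed

lemma split1: assumes Z: "zero_obj X Z" and A: "A \<in> Ob X"
  shows "real X (ezero X Z A) (idm X A) (mzero X A Z)"
proof -
  have Oo: "Z \<in> Ob X" using zo_ob Z .
  have ii: "cmp X (idm X A) (idm X A) = idm X A" using id_l[OF idm_hom[OF A]] .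
  have "is_biprod X A Z A (idm X A) (mzero X Z A) (idm X A) (mzero X A Z)"
    unfolding is_biprod_def
  proof (intro conjI)
    show "cmp X (mzero X A Z) (mzero X Z A) = idm X Z"
      using zo_from[OF Z cmp_hom[OF mzero_hom[OF Oo A] mzero_hom[OF A Oo]]]
            zo_from[OF Z idm_hom[OF Oo]] by simp
    show "madd X (cmp X (idm X A) (idm X A)) (cmp X (mzero X Z A) (mzero X A Z)) = idm X A"
      using id_l[OF idm_hom[OF A]] cmp_mzero_l[OF mzero_hom[OF A Oo] A]
        abgrp.lz[OF hom_grp[OF A A]] abgrp.comm[OF hom_grp[OF A A]] idm_hom[OF A] mzero_hom[OF A A]
      by metis
  qed (use ii A Oo idm_hom mzero_hom id_l id_r cmp_mzero_l cmp_mzero_r in auto)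
  then show ?thesis using ar_p5[OF A Oo] by blast
qed

lemma split2: assumes Z: "zero_obj X Z" and B: "B \<in> Ob X"
  shows "real X (ezero X B Z) (mzero X Z B) (idm X B)"
proof -
  have Oo: "Z \<in> Ob X" using zo_ob Z .
  have ii: "cmp X (idm X B) (idm X B) = idm X B" using id_l[OF idm_hom[OF B]] .
  have "is_biprod X Z B B (mzero X Z B) (idm X B) (mzero X B Z) (idm X B)"
    unfolding is_biprod_def
  proof (intro conjI)
    show "cmp X (mzero X B Z) (mzero X Z B) = idm X Z"
      using zo_from[OF Z cmp_hom[OF mzero_hom[OF Oo B] mzero_hom[OF B Oo]]]
            zo_from[OF Z idm_hom[OF Oo]] by simp
    show "madd X (cmp X (mzero X Z B) (mzero X B Z)) (cmp X (idm X B) (idm X B)) = idm X B"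
      using id_l[OF idm_hom[OF B]] cmp_mzero_l[OF mzero_hom[OF B Oo] B]
        abgrp.lz[OF hom_grp[OF B B]] idm_hom[OF B] by metis
  qed (use ii B Oo idm_hom mzero_hom id_l id_r cmp_mzero_l cmp_mzero_r in auto)
  then show ?thesis using ar_p5[OF Oo B] by blast
qed

end

context extri begin

lemma tm_unf: "tri_morph X d x y d' x' y' a b c \<Longrightarrow>
     a \<in> Hom X (src X x) (src X x') \<and> b \<in> Hom X (tgt X x) (tgt X x') \<and>
     c \<in> Hom X (tgt X y) (tgt X y') \<and>
     cmp X b x = cmp X x' a \<and> cmp X y' b = cmp X c y \<and> push X a d = pull X c d'"
  unfolding tri_morph_def by blast

lemma push_infl: assumes r: "real X d x y" shows "push X x d = ezero X (eC X d) (tgt X x)"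
proof -
  obtain Z where Z: "zero_obj X Z" using zero_ex by blast
  have Zo: "Z \<in> Ob X" using zo_ob Z .
  define B where "B = tgt X x"
  define C where "C = eC X d"
  have x: "x \<in> Hom X (src X x) B" and y: "y \<in> Hom X B C" and dE: "d \<in> E X C (src X x)"
    using real_x[OF r] real_y[OF r] real_E[OF r] real_mid[OF r] real_eC[OF r] unfolding B_def C_def by auto
  have Bo: "B \<in> Ob X" "C \<in> Ob X" using hom_obs y by auto
  have s: "real X (ezero X Z B) (idm X B) (mzero X B Z)" using split1[OF Z Bo(1)] .
  have "\<exists>a. tri_morph X d x y (ezero X Z B) (idm X B) (mzero X B Z) a (idm X B) (mzero X C Z)"
  proof (rule ET3opr[OF r s])
    show "idm X B \<in> Hom X (tgt X x) (tgt X (idm X B))" using idm_hom[OF Bo(1)] hom_tgt B_def by metis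
    show "mzero X C Z \<in> Hom X (tgt X y) (tgt X (mzero X B Z))"
      using mzero_hom[OF Bo(2) Zo] mzero_hom[OF Bo(1) Zo] hom_tgt y by metis
    show "cmp X (mzero X B Z) (idm X B) = cmp X (mzero X C Z) y"
      using id_r[OF mzero_hom[OF Bo(1) Zo]] cmp_mzero_l[OF y Zo] by simp
  qed
  then obtain a where t: "tri_morph X d x y (ezero X Z B) (idm X B) (mzero X B Z) a (idm X B) (mzero X C Z)" by blast
  note T = tm_unf[OF t]
  have a: "a \<in> Hom X (src X x) B" using T idm_hom[OF Bo(1)] hom_src by metis
  have "x = a" using T id_l[OF x] id_l[OF a] by metis
  then show ?thesis using T pull_ezero[OF mzero_hom[OF Bo(2) Zo] Bo(1)] B_def C_def by simp
qed

lemma pull_defl: assumes r: "real X d x y" shows "pull X y d = ezero X (src X y) (eA X d)"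
proof -
  obtain Z where Z: "zero_obj X Z" using zero_ex by blast
  have Zo: "Z \<in> Ob X" using zo_ob Z .
  define B where "B = tgt X x"
  define A where "A = eA X d"
  have x: "x \<in> Hom X A B" and y: "y \<in> Hom X B (tgt X y)"
    using real_x[OF r] real_y[OF r] real_mid[OF r] real_eA[OF r] unfolding B_def A_def by auto
  have Bo: "B \<in> Ob X" "A \<in> Ob X" using hom_obs x by auto
  have s: "real X (ezero X B Z) (mzero X Z B) (idm X B)" using split2[OF Z Bo(1)] .
  have "\<exists>c. tri_morph X (ezero X B Z) (mzero X Z B) (idm X B) d x y (mzero X Z A) (idm X B) c"
  proof (rule ET3r[OF s r])
    show "mzero X Z A \<in> Hom X (src X (mzero X Z B)) (src X x)"
      using mzero_hom[OF Zo Bo(1)] mzero_hom[OF Zo Bo(2)] hom_src x by metis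
    show "idm X B \<in> Hom X (tgt X (mzero X Z B)) (tgt X x)"
      using mzero_hom[OF Zo Bo(1)] idm_hom[OF Bo(1)] hom_tgt x by metis
    show "cmp X (idm X B) (mzero X Z B) = cmp X x (mzero X Z A)"
      using id_l[OF mzero_hom[OF Zo Bo(1)]] cmp_mzero_r[OF x Zo] by simp
  qed
  then obtain c where t: "tri_morph X (ezero X B Z) (mzero X Z B) (idm X B) d x y (mzero X Z A) (idm X B) c" by blast
  note T = tm_unf[OF t]
  have c: "c \<in> Hom X B (tgt X y)" using T idm_hom[OF Bo(1)] hom_tgt by metis
  have "y = c" using T id_r[OF y] id_r[OF c] by metis
  moreover have "src X y = B" using y hom_src by metis
  ultimately show ?thesis using T push_ezero[OF mzero_hom[OF Zo Bo(2)] Bo(1)] A_def by simp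
qed

lemma consec: assumes r: "real X d x y" shows "cmp X y x = mzero X (src X x) (tgt X y)"
proof -
  obtain Z where Z: "zero_obj X Z" using zero_ex by blast
  have Zo: "Z \<in> Ob X" using zo_ob Z .
  define A where "A = src X x"
  have x: "x \<in> Hom X A (tgt X x)" and y: "y \<in> Hom X (tgt X x) (tgt X y)"
    using real_x[OF r] real_y[OF r] real_mid[OF r] unfolding A_def by auto
  have Ao: "A \<in> Ob X" "tgt X y \<in> Ob X" using hom_obs x y by auto
  have s: "real X (ezero X Z A) (idm X A) (mzero X A Z)" using split1[OF Z Ao(1)] .
  have "\<exists>c. tri_morph X (ezero X Z A) (idm X A) (mzero X A Z) d x y (idm X A) x c"
  proof (rule ET3r[OF s r])
    show "idm X A \<in> Hom X (src X (idm X A)) (src X x)" using idm_hom[OF Ao(1)] hom_src A_def by metis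
    show "x \<in> Hom X (tgt X (idm X A)) (tgt X x)" using idm_hom[OF Ao(1)] hom_tgt x by metis
    show "cmp X x (idm X A) = cmp X x (idm X A)" ..
  qed
  then obtain c where t: "tri_morph X (ezero X Z A) (idm X A) (mzero X A Z) d x y (idm X A) x c" by blast
  note T = tm_unf[OF t]
  have c: "c \<in> Hom X Z (tgt X y)" using T mzero_hom[OF Ao(1) Zo] hom_tgt by metis
  have "cmp X y x = cmp X c (mzero X A Z)" using T id_r[OF x] by simp
  then show ?thesis using cmp_mzero_r[OF c Ao(1)] A_def by simp
qed

lemma ext_infl: assumes r: "real X d x y" and dE: "d \<in> E X C A" and e: "e \<in> Hom X A B"
  and z: "push X e d = ezero X C B"
  shows "\<exists>e'\<in>Hom X (tgt X x) B. cmp X e' x = e"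
proof -
  obtain Z where Z: "zero_obj X Z" using zero_ex by blast
  have Zo: "Z \<in> Ob X" using zo_ob Z .
  have Bo: "B \<in> Ob X" "C \<in> Ob X" using hom_obs e E_obs dE by auto
  have s: "real X (ezero X Z B) (idm X B) (mzero X B Z)" using split1[OF Z Bo(1)] .
  have eZ: "eA X (ezero X Z B) = B" "eC X (ezero X Z B) = Z" using ezero_E[OF Zo Bo(1)] by (auto simp: E_iff)
  have "\<exists>b\<in>Hom X (tgt X x) (tgt X (idm X B)). cmp X b x = cmp X (idm X B) e \<and>
          cmp X (mzero X B Z) b = cmp X (mzero X C Z) y"
  proof (rule ar_p4[OF r s])
    show "e \<in> Hom X (eA X d) (eA X (ezero X Z B))" using e dE eZ by (simp add: E_iff)
    show "mzero X C Z \<in> Hom X (eC X d) (eC X (ezero X Z B))" using mzero_hom[OF Bo(2) Zo] dE eZ by (simp add: E_iff)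
    show "push X e d = pull X (mzero X C Z) (ezero X Z B)"
      using z pull_ezero[OF mzero_hom[OF Bo(2) Zo] Bo(1)] by simp
  qed
  then obtain b where "b \<in> Hom X (tgt X x) (tgt X (idm X B))" "cmp X b x = cmp X (idm X B) e" by blast
  then show ?thesis using id_l[OF e] hom_tgt[OF idm_hom[OF Bo(1)]] by auto
qed

lemma ext_defl: assumes r: "real X d x y" and dE: "d \<in> E X C A" and c: "c \<in> Hom X W C"
  and z: "pull X c d = ezero X W A"
  shows "\<exists>c'\<in>Hom X W (tgt X x). cmp X y c' = c"
proof -
  obtain Z where Z: "zero_obj X Z" using zero_ex by blast
  have Zo: "Z \<in> Ob X" using zo_ob Z .
  have Wo: "W \<in> Ob X" "A \<in> Ob X" using hom_obs c E_obs dE by auto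
  have s: "real X (ezero X W Z) (mzero X Z W) (idm X W)" using split2[OF Z Wo(1)] .
  have eZ: "eA X (ezero X W Z) = Z" "eC X (ezero X W Z) = W" using ezero_E[OF Wo(1) Zo] by (auto simp: E_iff)
  have "\<exists>b\<in>Hom X (tgt X (mzero X Z W)) (tgt X x). cmp X b (mzero X Z W) = cmp X x (mzero X Z A) \<and>
          cmp X y b = cmp X c (idm X W)"
  proof (rule ar_p4[OF s r])
    show "mzero X Z A \<in> Hom X (eA X (ezero X W Z)) (eA X d)" using mzero_hom[OF Zo Wo(2)] dE eZ by (simp add: E_iff)
    show "c \<in> Hom X (eC X (ezero X W Z)) (eC X d)" using c dE eZ by (simp add: E_iff)
    show "push X (mzero X Z A) (ezero X W Z) = pull X c d"
      using z push_ezero[OF mzero_hom[OF Zo Wo(2)] Wo(1)] by simp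
  qed
  then obtain b where "b \<in> Hom X (tgt X (mzero X Z W)) (tgt X x)" "cmp X y b = cmp X c (idm X W)" by blast
  then show ?thesis using id_r[OF c] hom_tgt[OF mzero_hom[OF Zo Wo(1)]] by auto
qed

lemma ext_via_infl: assumes r: "real X eta e f" and etaE: "eta \<in> E X C' A"
  and epsE: "eps \<in> E X W A" and z: "push X e eps = ezero X W (tgt X e)"
  shows "\<exists>c\<in>Hom X W C'. eps = pull X c eta"
proof -
  obtain x y where rx: "real X eps x y" using ar_p2 E_ex[OF epsE] by blast
  have e: "e \<in> Hom X A (tgt X e)" using real_in[OF r etaE] by blast
  obtain e' where e': "e' \<in> Hom X (tgt X x) (tgt X e)" "cmp X e' x = e"
    using ext_infl[OF rx epsE e z] by blast
  have sx: "src X x = A" "src X e = A" using real_eA[OF rx] real_eA[OF r] epsE etaE by (auto simp: E_iff)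
  have Ao: "A \<in> Ob X" using E_obs epsE by auto
  have "\<exists>c. tri_morph X eps x y eta e f (idm X A) e' c"
  proof (rule ET3r[OF rx r])
    show "idm X A \<in> Hom X (src X x) (src X e)" using sx idm_hom[OF Ao] by simp
    show "e' \<in> Hom X (tgt X x) (tgt X e)" using e' by simp
    show "cmp X e' x = cmp X e (idm X A)" using e'(2) id_r[OF e] by simp
  qed
  then obtain c where t: "tri_morph X eps x y eta e f (idm X A) e' c" by blast
  note T = tm_unf[OF t]
  have "tgt X y = W" "tgt X f = C'" using real_eC[OF rx] real_eC[OF r] epsE etaE by (auto simp: E_iff)
  then show ?thesis using T push_id[OF epsE] by auto
qed

lemma ext_via_defl: assumes r: "real X gam k p" and gE: "gam \<in> E X C K"
  and dE: "del \<in> E X C A" and z: "pull X p del = ezero X (src X p) A"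
  shows "\<exists>h\<in>Hom X K A. del = push X h gam"
proof -
  obtain x y where rx: "real X del x y" using ar_p2 E_ex[OF dE] by blast
  have p: "p \<in> Hom X (src X p) C" using real_in[OF r gE] real_mid[OF r] by metis
  obtain p' where p': "p' \<in> Hom X (src X p) (tgt X x)" "cmp X y p' = p"
    using ext_defl[OF rx dE p z] by blast
  have Co: "C \<in> Ob X" using E_obs dE by auto
  have ty: "tgt X y = C" "tgt X p = C" using real_eC[OF rx] real_eC[OF r] dE gE by (auto simp: E_iff)
  have "\<exists>a. tri_morph X gam k p del x y a p' (idm X C)"
  proof (rule ET3opr[OF r rx])
    show "p' \<in> Hom X (tgt X k) (tgt X x)" using p' real_mid[OF r] by simp
    show "idm X C \<in> Hom X (tgt X p) (tgt X y)" using ty idm_hom[OF Co] by simp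
    show "cmp X y p' = cmp X (idm X C) p" using p'(2) id_l[OF p] by simp
  qed
  then obtain a where t: "tri_morph X gam k p del x y a p' (idm X C)" by blast
  note T = tm_unf[OF t]
  have "src X k = K" "src X x = A" using real_eA[OF rx] real_eA[OF r] dE gE by (auto simp: E_iff)
  then show ?thesis using T pull_id[OF dE] by auto
qed

lemma inj_factor: assumes I: "inj_obj X (tgt X x)" and r: "real X eps x y" and eE: "eps \<in> E X C A"
  and dE: "del \<in> E X W A"
  shows "\<exists>c\<in>Hom X W C. del = pull X c eps"
proof (rule ext_via_infl[OF r eE dE])
  have x: "x \<in> Hom X A (tgt X x)" using real_in[OF r eE] by blast
  have "push X x del \<in> E X W (tgt X x)" using push_E[OF dE x] .
  then show "push X x del = ezero X W (tgt X x)" using I E_obs[OF dE] unfolding inj_obj_def by blast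
qed

lemma inj_mid: assumes r: "real X g0 x y" and gE: "g0 \<in> E X E0 A" and I: "inj_obj X E0"
  and dE: "del \<in> E X C (tgt X x)"
  shows "\<exists>eps\<in>E X C A. del = push X x eps"
proof -
  obtain f2 g2 where r2: "real X del f2 g2" using ar_p2 E_ex[OF dE] by blast
  have m: "tgt X x = src X f2" using real_eA[OF r2] dE by (simp add: E_iff)
  have "\<exists>h' dd e d''. real X d'' (cmp X f2 x) h' \<and>
          dd \<in> Hom X (tgt X y) (tgt X h') \<and> e \<in> Hom X (tgt X h') (tgt X g2) \<and>
          cmp X dd y = cmp X h' f2 \<and> cmp X e h' = g2 \<and>
          real X (push X y del) dd e \<and>
          pull X dd d'' = g0 \<and> push X x d'' = pull X e del"
    using et4 r r2 m unfolding ET4_def by blast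
  then obtain h' dd e d'' where H: "real X d'' (cmp X f2 x) h'"
    "dd \<in> Hom X (tgt X y) (tgt X h')" "e \<in> Hom X (tgt X h') (tgt X g2)"
    "real X (push X y del) dd e" "push X x d'' = pull X e del" by blast
  have x: "x \<in> Hom X A (tgt X x)" and y: "y \<in> Hom X (tgt X x) E0" using real_in[OF r gE] by auto
  have tg: "tgt X g2 = C" using real_eC[OF r2] dE by (simp add: E_iff)
  have pE: "push X y del \<in> E X C E0" using push_E[OF dE y] .
  have pz: "push X y del = ezero X C E0" using pE I E_obs[OF pE] unfolding inj_obj_def by blast
  have Co: "C \<in> Ob X" using E_obs dE by auto
  have "\<exists>s\<in>Hom X C (tgt X dd). cmp X e s = idm X C"
    using ext_defl[OF H(4) pE idm_hom[OF Co]] pull_id[OF pE] pz by simp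
  then obtain s where s: "s \<in> Hom X C (tgt X h')" "cmp X e s = idm X C" using H(2) hom_tgt by metis
  have e: "e \<in> Hom X (tgt X h') C" using H(3) tg by simp
  have f2: "f2 \<in> Hom X (tgt X x) (src X g2)" using real_x[OF r2] m by simp
  have d''E: "d'' \<in> E X (tgt X h') A"
    using real_E[OF H(1)] hom_src[OF cmp_hom[OF x f2]] by simp
  have "del = pull X (cmp X e s) del" using s pull_id[OF dE] by simp
  also have "\<dots> = pull X s (pull X e del)" using pull_cmp[OF dE e s(1)] .
  also have "\<dots> = pull X s (push X x d'')" using H(5) by simp
  also have "\<dots> = push X x (pull X s d'')" using push_pull[OF d''E x s(1)] by simp
  finally show ?thesis using pull_E[OF d''E s(1)] by blast
qed

end

context extri begin

lemma perpR_I: "g \<in> Mor X \<Longrightarrow> (\<And>m d. m \<in> M \<Longrightarrow> d \<in> E X (tgt X m) (src X g) \<Longrightarrow>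
   pull X m (push X g d) = ezero X (src X m) (tgt X g)) \<Longrightarrow> g \<in> perpR X M"
  unfolding perpR_def by (auto simp: E_iff)
lemma perpR_D: "g \<in> perpR X M \<Longrightarrow> m \<in> M \<Longrightarrow> d \<in> E X (tgt X m) (src X g) \<Longrightarrow>
   pull X m (push X g d) = ezero X (src X m) (tgt X g)"
  unfolding perpR_def by (auto simp: E_iff)
lemma perpR_mor: "g \<in> perpR X M \<Longrightarrow> g \<in> Mor X" unfolding perpR_def by auto
lemma perpL_I: "g \<in> Mor X \<Longrightarrow> (\<And>m d. m \<in> M \<Longrightarrow> d \<in> E X (tgt X g) (src X m) \<Longrightarrow>
   pull X g (push X m d) = ezero X (src X g) (tgt X m)) \<Longrightarrow> g \<in> perpL X M"
  unfolding perpL_def by (auto simp: E_iff)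
lemma perpL_D: "g \<in> perpL X M \<Longrightarrow> m \<in> M \<Longrightarrow> d \<in> E X (tgt X g) (src X m) \<Longrightarrow>
   pull X g (push X m d) = ezero X (src X g) (tgt X m)"
  unfolding perpL_def by (auto simp: E_iff)
lemma perpL_mor: "g \<in> perpL X M \<Longrightarrow> g \<in> Mor X" unfolding perpL_def by auto

lemma perpR_ideal: assumes M: "M \<subseteq> Mor X" shows "ideal X (perpR X M)"
  unfolding ideal_def
proof (intro conjI ballI allI impI)
  show "perpR X M \<subseteq> Mor X" using perpR_mor by blast
next
  fix A B assume AB: "A \<in> Ob X" "B \<in> Ob X"
  have z: "mzero X A B \<in> Hom X A B" using mzero_hom AB by blast
  show "mzero X A B \<in> perpR X M"
  proof (rule perpR_I)
    show "mzero X A B \<in> Mor X" using z hom_mor by blast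
    fix m d assume m: "m \<in> M" and d: "d \<in> E X (tgt X m) (src X (mzero X A B))"
    have mh: "m \<in> Hom X (src X m) (tgt X m)" using m M mor_hom by blast
    have dE: "d \<in> E X (tgt X m) A" using d hom_src[OF z] by simp
    show "pull X m (push X (mzero X A B) d) = ezero X (src X m) (tgt X (mzero X A B))"
      using push_mzero[OF dE AB(2)] pull_ezero[OF mh AB(2)] hom_tgt[OF z] by simp
  qed
next
  fix f g assume f: "f \<in> perpR X M" and g: "g \<in> perpR X M" and st: "src X f = src X g \<and> tgt X f = tgt X g"
  have fh: "f \<in> Hom X (src X f) (tgt X f)" and gh: "g \<in> Hom X (src X f) (tgt X f)"
    using perpR_mor[OF f] perpR_mor[OF g] st mor_hom by (metis, metis)
  have sh: "madd X f g \<in> Hom X (src X f) (tgt X f)" using madd_hom[OF fh gh] .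
  show "madd X f g \<in> perpR X M"
  proof (rule perpR_I)
    show "madd X f g \<in> Mor X" using sh hom_mor by blast
    fix m d assume m: "m \<in> M" and d: "d \<in> E X (tgt X m) (src X (madd X f g))"
    have mh: "m \<in> Hom X (src X m) (tgt X m)" using m M mor_hom by blast
    have dE: "d \<in> E X (tgt X m) (src X f)" using d hom_src[OF sh] by simp
    have Ob: "src X m \<in> Ob X" "tgt X f \<in> Ob X" using hom_obs mh fh by auto
    have "pull X m (push X (madd X f g) d) = eadd X (pull X m (push X f d)) (pull X m (push X g d))"
      using push_madd[OF dE fh gh] pull_eadd[OF push_E[OF dE fh] push_E[OF dE gh] mh] by simp
    also have "\<dots> = eadd X (ezero X (src X m) (tgt X f)) (ezero X (src X m) (tgt X f))"
      using perpR_D[OF f m] perpR_D[OF g m] dE st by simp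
    also have "\<dots> = ezero X (src X m) (tgt X f)" using abgrp.lz[OF E_grp[OF Ob] ezero_E[OF Ob]] .
    finally show "pull X m (push X (madd X f g) d) = ezero X (src X m) (tgt X (madd X f g))"
      using hom_tgt[OF sh] by simp
  qed
next
  fix f g assume f: "f \<in> perpR X M" and g: "g \<in> Mor X" and t: "tgt X f = src X g"
  have fh: "f \<in> Hom X (src X f) (tgt X f)" using perpR_mor[OF f] mor_hom by blast
  have gh: "g \<in> Hom X (tgt X f) (tgt X g)" using g t mor_hom by metis
  have ch: "cmp X g f \<in> Hom X (src X f) (tgt X g)" using cmp_hom[OF fh gh] .
  show "cmp X g f \<in> perpR X M"
  proof (rule perpR_I)
    show "cmp X g f \<in> Mor X" using ch hom_mor by blast
    fix m d assume m: "m \<in> M" and d: "d \<in> E X (tgt X m) (src X (cmp X g f))"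
    have mh: "m \<in> Hom X (src X m) (tgt X m)" using m M mor_hom by blast
    have dE: "d \<in> E X (tgt X m) (src X f)" using d hom_src[OF ch] by simp
    have "pull X m (push X (cmp X g f) d) = push X g (pull X m (push X f d))"
      using push_cmp[OF dE fh gh] push_pull[OF push_E[OF dE fh] gh mh] by simp
    also have "\<dots> = push X g (ezero X (src X m) (tgt X f))" using perpR_D[OF f m dE] by simp
    also have "\<dots> = ezero X (src X m) (tgt X g)" using push_ezero[OF gh] hom_obs[OF mh] by simp
    finally show "pull X m (push X (cmp X g f) d) = ezero X (src X m) (tgt X (cmp X g f))"
      using hom_tgt[OF ch] by simp
  qed
next
  fix f g assume f: "f \<in> perpR X M" and g: "g \<in> Mor X" and t: "tgt X g = src X f"
  have fh: "f \<in> Hom X (src X f) (tgt X f)" using perpR_mor[OF f] mor_hom by blast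
  have gh: "g \<in> Hom X (src X g) (src X f)" using g t mor_hom by metis
  have ch: "cmp X f g \<in> Hom X (src X g) (tgt X f)" using cmp_hom[OF gh fh] .
  show "cmp X f g \<in> perpR X M"
  proof (rule perpR_I)
    show "cmp X f g \<in> Mor X" using ch hom_mor by blast
    fix m d assume m: "m \<in> M" and d: "d \<in> E X (tgt X m) (src X (cmp X f g))"
    have dE: "d \<in> E X (tgt X m) (src X g)" using d hom_src[OF ch] by simp
    have "pull X m (push X (cmp X f g) d) = pull X m (push X f (push X g d))"
      using push_cmp[OF dE gh fh] by simp
    also have "\<dots> = ezero X (src X m) (tgt X f)" using perpR_D[OF f m push_E[OF dE gh]] .
    finally show "pull X m (push X (cmp X f g) d) = ezero X (src X m) (tgt X (cmp X f g))"
      using hom_tgt[OF ch] by simp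
  qed
qed

lemma perpL_ideal: assumes M: "M \<subseteq> Mor X" shows "ideal X (perpL X M)"
  unfolding ideal_def
proof (intro conjI ballI allI impI)
  show "perpL X M \<subseteq> Mor X" using perpL_mor by blast
next
  fix A B assume AB: "A \<in> Ob X" "B \<in> Ob X"
  have z: "mzero X A B \<in> Hom X A B" using mzero_hom AB by blast
  show "mzero X A B \<in> perpL X M"
  proof (rule perpL_I)
    show "mzero X A B \<in> Mor X" using z hom_mor by blast
    fix m d assume m: "m \<in> M" and d: "d \<in> E X (tgt X (mzero X A B)) (src X m)"
    have mh: "m \<in> Hom X (src X m) (tgt X m)" using m M mor_hom by blast
    have dE: "push X m d \<in> E X B (tgt X m)" using push_E[OF _ mh] d hom_tgt[OF z] by simp
    show "pull X (mzero X A B) (push X m d) = ezero X (src X (mzero X A B)) (tgt X m)"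
      using pull_mzero[OF dE AB(1)] hom_src[OF z] by simp
  qed
next
  fix f g assume f: "f \<in> perpL X M" and g: "g \<in> perpL X M" and st: "src X f = src X g \<and> tgt X f = tgt X g"
  have fh: "f \<in> Hom X (src X f) (tgt X f)" and gh: "g \<in> Hom X (src X f) (tgt X f)"
    using perpL_mor[OF f] perpL_mor[OF g] st mor_hom by (metis, metis)
  have sh: "madd X f g \<in> Hom X (src X f) (tgt X f)" using madd_hom[OF fh gh] .
  show "madd X f g \<in> perpL X M"
  proof (rule perpL_I)
    show "madd X f g \<in> Mor X" using sh hom_mor by blast
    fix m d assume m: "m \<in> M" and d: "d \<in> E X (tgt X (madd X f g)) (src X m)"
    have mh: "m \<in> Hom X (src X m) (tgt X m)" using m M mor_hom by blast
    have dE: "d \<in> E X (tgt X f) (src X m)" using d hom_tgt[OF sh] by simp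
    have pE: "push X m d \<in> E X (tgt X f) (tgt X m)" using push_E[OF dE mh] .
    have Ob: "src X f \<in> Ob X" "tgt X m \<in> Ob X" using hom_obs mh fh by auto
    have "pull X (madd X f g) (push X m d) = eadd X (pull X f (push X m d)) (pull X g (push X m d))"
      using pull_madd[OF pE fh gh] by simp
    also have "\<dots> = eadd X (ezero X (src X f) (tgt X m)) (ezero X (src X f) (tgt X m))"
      using perpL_D[OF f m] perpL_D[OF g m] dE st by simp
    also have "\<dots> = ezero X (src X f) (tgt X m)" using abgrp.lz[OF E_grp[OF Ob] ezero_E[OF Ob]] .
    finally show "pull X (madd X f g) (push X m d) = ezero X (src X (madd X f g)) (tgt X m)"
      using hom_src[OF sh] by simp
  qed
next
  fix f g assume f: "f \<in> perpL X M" and g: "g \<in> Mor X" and t: "tgt X f = src X g"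
  have fh: "f \<in> Hom X (src X f) (tgt X f)" using perpL_mor[OF f] mor_hom by blast
  have gh: "g \<in> Hom X (tgt X f) (tgt X g)" using g t mor_hom by metis
  have ch: "cmp X g f \<in> Hom X (src X f) (tgt X g)" using cmp_hom[OF fh gh] .
  show "cmp X g f \<in> perpL X M"
  proof (rule perpL_I)
    show "cmp X g f \<in> Mor X" using ch hom_mor by blast
    fix m d assume m: "m \<in> M" and d: "d \<in> E X (tgt X (cmp X g f)) (src X m)"
    have mh: "m \<in> Hom X (src X m) (tgt X m)" using m M mor_hom by blast
    have dE: "d \<in> E X (tgt X g) (src X m)" using d hom_tgt[OF ch] by simp
    have "pull X (cmp X g f) (push X m d) = pull X f (push X m (pull X g d))"
      using pull_cmp[OF push_E[OF dE mh] gh fh] push_pull[OF dE mh gh] by simp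
    also have "\<dots> = ezero X (src X f) (tgt X m)" using perpL_D[OF f m pull_E[OF dE gh]] .
    finally show "pull X (cmp X g f) (push X m d) = ezero X (src X (cmp X g f)) (tgt X m)"
      using hom_src[OF ch] by simp
  qed
next
  fix f g assume f: "f \<in> perpL X M" and g: "g \<in> Mor X" and t: "tgt X g = src X f"
  have fh: "f \<in> Hom X (src X f) (tgt X f)" using perpL_mor[OF f] mor_hom by blast
  have gh: "g \<in> Hom X (src X g) (src X f)" using g t mor_hom by metis
  have ch: "cmp X f g \<in> Hom X (src X g) (tgt X f)" using cmp_hom[OF gh fh] .
  show "cmp X f g \<in> perpL X M"
  proof (rule perpL_I)
    show "cmp X f g \<in> Mor X" using ch hom_mor by blast
    fix m d assume m: "m \<in> M" and d: "d \<in> E X (tgt X (cmp X f g)) (src X m)"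
    have mh: "m \<in> Hom X (src X m) (tgt X m)" using m M mor_hom by blast
    have dE: "d \<in> E X (tgt X f) (src X m)" using d hom_tgt[OF ch] by simp
    have "pull X (cmp X f g) (push X m d) = pull X g (pull X f (push X m d))"
      using pull_cmp[OF push_E[OF dE mh] fh gh] by simp
    also have "\<dots> = pull X g (ezero X (src X f) (tgt X m))" using perpL_D[OF f m dE] by simp
    also have "\<dots> = ezero X (src X g) (tgt X m)" using pull_ezero[OF gh] hom_obs[OF mh] by simp
    finally show "pull X (cmp X f g) (push X m d) = ezero X (src X (cmp X f g)) (tgt X m)"
      using hom_src[OF ch] by simp
  qed
qed

lemma perpL_anti: "M \<subseteq> N \<Longrightarrow> perpL X N \<subseteq> perpL X M" unfolding perpL_def by blast
lemma perpR_anti: "M \<subseteq> N \<Longrightarrow> perpR X N \<subseteq> perpR X M" unfolding perpR_def by blast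
lemma sub_perpRL: "M \<subseteq> Mor X \<Longrightarrow> M \<subseteq> perpR X (perpL X M)"
  unfolding perpR_def perpL_def by blast
lemma sub_perpLR: "M \<subseteq> Mor X \<Longrightarrow> M \<subseteq> perpL X (perpR X M)"
  unfolding perpR_def perpL_def by blast
lemma perpL_triple: assumes "M \<subseteq> Mor X" shows "perpL X (perpR X (perpL X M)) = perpL X M"
proof
  show "perpL X (perpR X (perpL X M)) \<subseteq> perpL X M" using perpL_anti sub_perpRL[OF assms] by blast
  show "perpL X M \<subseteq> perpL X (perpR X (perpL X M))" using sub_perpLR perpL_mor by blast
qed

end

context extri begin

lemma sf_parts: assumes "additive_subfunctor X G" shows
  "G \<subseteq> etcat.Ex X"
  "C \<in> Ob X \<Longrightarrow> A \<in> Ob X \<Longrightarrow> ezero X C A \<in> G"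
  "d \<in> G \<Longrightarrow> d' \<in> G \<Longrightarrow> eC X d = eC X d' \<Longrightarrow> eA X d = eA X d' \<Longrightarrow> eadd X d d' \<in> G"
  "d \<in> G \<Longrightarrow> eneg X d \<in> G"
  "d \<in> G \<Longrightarrow> c \<in> Mor X \<Longrightarrow> tgt X c = eC X d \<Longrightarrow> pull X c d \<in> G"
  "d \<in> G \<Longrightarrow> a \<in> Mor X \<Longrightarrow> src X a = eA X d \<Longrightarrow> push X a d \<in> G"
  using assms unfolding additive_subfunctor_def by blast+

lemma sf_pull: "additive_subfunctor X G \<Longrightarrow> d \<in> G \<Longrightarrow> d \<in> E X C A \<Longrightarrow> c \<in> Hom X W C \<Longrightarrow> pull X c d \<in> G"
  using sf_parts(5) by (auto simp: E_iff Hom_iff)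
lemma sf_push: "additive_subfunctor X G \<Longrightarrow> d \<in> G \<Longrightarrow> d \<in> E X C A \<Longrightarrow> a \<in> Hom X A B \<Longrightarrow> push X a d \<in> G"
  using sf_parts(6) by (auto simp: E_iff Hom_iff)

lemma Ph_I: "f \<in> Mor X \<Longrightarrow> (\<And>d A. d \<in> E X (tgt X f) A \<Longrightarrow> pull X f d \<in> G) \<Longrightarrow> f \<in> Ph X G"
  unfolding Ph_def by (auto simp: E_iff)
lemma Ph_D: "f \<in> Ph X G \<Longrightarrow> d \<in> E X (tgt X f) A \<Longrightarrow> pull X f d \<in> G"
  unfolding Ph_def by (auto simp: E_iff)
lemma Ph_mor: "f \<in> Ph X G \<Longrightarrow> f \<in> Mor X" unfolding Ph_def by auto
lemma Ph_mono: "G \<subseteq> H \<Longrightarrow> Ph X G \<subseteq> Ph X H" unfolding Ph_def by blast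

lemma Finj_D: "i \<in> F_inj X G \<Longrightarrow> d \<in> G \<Longrightarrow> eA X d = src X i \<Longrightarrow> push X i d = ezero X (eC X d) (tgt X i)"
  unfolding F_inj_def by auto
lemma Finj_mor: "i \<in> F_inj X G \<Longrightarrow> i \<in> Mor X" unfolding F_inj_def by auto

lemma star_I: "m \<in> M \<Longrightarrow> d \<in> E X (tgt X m) A \<Longrightarrow> pull X m d \<in> star X M"
  unfolding star_def by (auto simp: E_iff)
lemma star_E: "e \<in> star X M \<Longrightarrow> \<exists>m\<in>M. \<exists>d\<in>etcat.Ex X. eC X d = tgt X m \<and> e = pull X m d"
  unfolding star_def by auto

lemma Ph_sub_perpL: assumes sf: "additive_subfunctor X G" shows "Ph X G \<subseteq> perpL X (F_inj X G)"
proof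
  fix f assume f: "f \<in> Ph X G"
  have fh: "f \<in> Hom X (src X f) (tgt X f)" using Ph_mor[OF f] mor_hom by blast
  show "f \<in> perpL X (F_inj X G)"
  proof (rule perpL_I[OF Ph_mor[OF f]])
    fix m d assume m: "m \<in> F_inj X G" and d: "d \<in> E X (tgt X f) (src X m)"
    have mh: "m \<in> Hom X (src X m) (tgt X m)" using Finj_mor[OF m] mor_hom by blast
    have pd: "pull X f d \<in> G" using Ph_D[OF f d] .
    have pE: "pull X f d \<in> E X (src X f) (src X m)" using pull_E[OF d fh] .
    have "pull X f (push X m d) = push X m (pull X f d)" using push_pull[OF d mh fh] by simp
    also have "\<dots> = ezero X (src X f) (tgt X m)" using Finj_D[OF m pd] pE by (simp add: E_iff)
    finally show "pull X f (push X m d) = ezero X (src X f) (tgt X m)" .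
  qed
qed

lemma Finj_sub_perpR_Ph: "F_inj X G \<subseteq> perpR X (Ph X G)"
proof
  fix i assume i: "i \<in> F_inj X G"
  have ih: "i \<in> Hom X (src X i) (tgt X i)" using Finj_mor[OF i] mor_hom by blast
  show "i \<in> perpR X (Ph X G)"
  proof (rule perpR_I[OF Finj_mor[OF i]])
    fix m d assume m: "m \<in> Ph X G" and d: "d \<in> E X (tgt X m) (src X i)"
    have mh: "m \<in> Hom X (src X m) (tgt X m)" using Ph_mor[OF m] mor_hom by blast
    have pd: "pull X m d \<in> G" using Ph_D[OF m d] .
    have pE: "pull X m d \<in> E X (src X m) (src X i)" using pull_E[OF d mh] .
    have "pull X m (push X i d) = push X i (pull X m d)" using push_pull[OF d ih mh] by simp
    also have "\<dots> = ezero X (src X m) (tgt X i)" using Finj_D[OF i pd] pE by (simp add: E_iff)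
    finally show "pull X m (push X i d) = ezero X (src X m) (tgt X i)" .
  qed
qed

lemma perpR_eq_Finj_star: "perpR X (Ph X G) = F_inj X (star X (Ph X G))"
proof
  show "perpR X (Ph X G) \<subseteq> F_inj X (star X (Ph X G))"
  proof
    fix g assume g: "g \<in> perpR X (Ph X G)"
    have gh: "g \<in> Hom X (src X g) (tgt X g)" using perpR_mor[OF g] mor_hom by blast
    show "g \<in> F_inj X (star X (Ph X G))" unfolding F_inj_def
    proof (intro CollectI conjI ballI impI)
      show "g \<in> Mor X" using perpR_mor[OF g] .
      fix e assume e: "e \<in> star X (Ph X G)" and eA: "eA X e = src X g"
      obtain m d where m: "m \<in> Ph X G" and d: "d \<in> etcat.Ex X" "eC X d = tgt X m" and ed: "e = pull X m d"
        using star_E[OF e] by blast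
      have mh: "m \<in> Hom X (src X m) (tgt X m)" using Ph_mor[OF m] mor_hom by blast
      have dE: "d \<in> E X (tgt X m) (src X g)" using d eA ed pull_E[OF ex_E[OF d(1)]] mh
        by (metis E_iff)
      have "push X g e = pull X m (push X g d)" using ed push_pull[OF dE gh mh] by simp
      also have "\<dots> = ezero X (src X m) (tgt X g)" using perpR_D[OF g m dE] .
      finally show "push X g e = ezero X (eC X e) (tgt X g)" using ed pull_E[OF dE mh] by (simp add: E_iff)
    qed
  qed
  show "F_inj X (star X (Ph X G)) \<subseteq> perpR X (Ph X G)"
  proof
    fix g assume g: "g \<in> F_inj X (star X (Ph X G))"
    have gh: "g \<in> Hom X (src X g) (tgt X g)" using Finj_mor[OF g] mor_hom by blast
    show "g \<in> perpR X (Ph X G)"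
    proof (rule perpR_I[OF Finj_mor[OF g]])
      fix m d assume m: "m \<in> Ph X G" and d: "d \<in> E X (tgt X m) (src X g)"
      have mh: "m \<in> Hom X (src X m) (tgt X m)" using Ph_mor[OF m] mor_hom by blast
      have st: "pull X m d \<in> star X (Ph X G)" using star_I[OF m d] .
      have pE: "pull X m d \<in> E X (src X m) (src X g)" using pull_E[OF d mh] .
      have "pull X m (push X g d) = push X g (pull X m d)" using push_pull[OF d gh mh] by simp
      also have "\<dots> = ezero X (src X m) (tgt X g)" using Finj_D[OF g st] pE by (simp add: E_iff)
      finally show "pull X m (push X g d) = ezero X (src X m) (tgt X g)" .
    qed
  qed
qed

lemma Ph_lcomp: assumes f: "f \<in> Ph X G" and h: "h \<in> Hom X (tgt X f) C" shows "cmp X h f \<in> Ph X G"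
proof -
  have fh: "f \<in> Hom X (src X f) (tgt X f)" using Ph_mor[OF f] mor_hom by blast
  have ch: "cmp X h f \<in> Hom X (src X f) C" using cmp_hom[OF fh h] .
  show ?thesis
  proof (rule Ph_I)
    show "cmp X h f \<in> Mor X" using ch hom_mor by blast
    fix d A assume d: "d \<in> E X (tgt X (cmp X h f)) A"
    have dE: "d \<in> E X C A" using d hom_tgt[OF ch] by simp
    have "pull X (cmp X h f) d = pull X f (pull X h d)" using pull_cmp[OF dE h fh] .
    then show "pull X (cmp X h f) d \<in> G" using Ph_D[OF f pull_E[OF dE h]] by simp
  qed
qed

lemma Ph_rcomp: assumes sf: "additive_subfunctor X G" and f: "f \<in> Ph X G" and c: "c \<in> Hom X W (src X f)"
  shows "cmp X f c \<in> Ph X G"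
proof -
  have fh: "f \<in> Hom X (src X f) (tgt X f)" using Ph_mor[OF f] mor_hom by blast
  have ch: "cmp X f c \<in> Hom X W (tgt X f)" using cmp_hom[OF c fh] .
  show ?thesis
  proof (rule Ph_I)
    show "cmp X f c \<in> Mor X" using ch hom_mor by blast
    fix d A assume d: "d \<in> E X (tgt X (cmp X f c)) A"
    have dE: "d \<in> E X (tgt X f) A" using d hom_tgt[OF ch] by simp
    have "pull X (cmp X f c) d = pull X c (pull X f d)" using pull_cmp[OF dE fh c] .
    then show "pull X (cmp X f c) d \<in> G" using sf_pull[OF sf Ph_D[OF f dE] pull_E[OF dE fh] c] by simp
  qed
qed

lemma Ph_madd: assumes sf: "additive_subfunctor X G" and f: "f \<in> Ph X G" and g: "g \<in> Ph X G"
  and fh: "f \<in> Hom X W C" and gh: "g \<in> Hom X W C"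
  shows "madd X f g \<in> Ph X G"
proof -
  have sh: "madd X f g \<in> Hom X W C" using madd_hom[OF fh gh] .
  show ?thesis
  proof (rule Ph_I)
    show "madd X f g \<in> Mor X" using sh hom_mor by blast
    fix d A assume d: "d \<in> E X (tgt X (madd X f g)) A"
    have dE: "d \<in> E X C A" using d hom_tgt[OF sh] by simp
    have "pull X (madd X f g) d = eadd X (pull X f d) (pull X g d)" using pull_madd[OF dE fh gh] .
    moreover have "pull X f d \<in> G" "pull X g d \<in> G" using Ph_D[OF f] Ph_D[OF g] dE hom_tgt fh gh by metis+
    moreover have "pull X f d \<in> E X W A" "pull X g d \<in> E X W A" using pull_E dE fh gh by blast+
    ultimately show "pull X (madd X f g) d \<in> G" using sf_parts(3)[OF sf] by (simp add: E_iff)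
  qed
qed

lemma Ph_mzero: assumes sf: "additive_subfunctor X G" and "W \<in> Ob X" "C \<in> Ob X" shows "mzero X W C \<in> Ph X G"
proof -
  have zh: "mzero X W C \<in> Hom X W C" using mzero_hom assms by blast
  show ?thesis
  proof (rule Ph_I)
    show "mzero X W C \<in> Mor X" using zh hom_mor by blast
    fix d A assume d: "d \<in> E X (tgt X (mzero X W C)) A"
    have dE: "d \<in> E X C A" using d hom_tgt[OF zh] by simp
    show "pull X (mzero X W C) d \<in> G" using pull_mzero[OF dE assms(2)] sf_parts(2)[OF sf assms(2)] E_obs[OF dE] by simp
  qed
qed

lemma ideal_parts: assumes "ideal X K" shows
  "K \<subseteq> Mor X"
  "A \<in> Ob X \<Longrightarrow> B \<in> Ob X \<Longrightarrow> mzero X A B \<in> K"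
  "f \<in> K \<Longrightarrow> g \<in> K \<Longrightarrow> src X f = src X g \<Longrightarrow> tgt X f = tgt X g \<Longrightarrow> madd X f g \<in> K"
  "f \<in> K \<Longrightarrow> g \<in> Mor X \<Longrightarrow> tgt X f = src X g \<Longrightarrow> cmp X g f \<in> K"
  "f \<in> K \<Longrightarrow> g \<in> Mor X \<Longrightarrow> tgt X g = src X f \<Longrightarrow> cmp X f g \<in> K"
  using assms unfolding ideal_def by blast+

lemma ideal_neg: assumes K: "ideal X K" and f: "f \<in> K" shows "mneg X f \<in> K"
proof -
  have fh: "f \<in> Hom X (src X f) (tgt X f)" using ideal_parts(1)[OF K] f mor_hom by blast
  have io: "idm X (tgt X f) \<in> Hom X (tgt X f) (tgt X f)" using idm_hom hom_obs[OF fh] by blast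
  have "cmp X (mneg X (idm X (tgt X f))) f = mneg X f" using cmp_mneg_l[OF fh io] id_l[OF fh] by simp
  moreover have "cmp X (mneg X (idm X (tgt X f))) f \<in> K"
    using ideal_parts(4)[OF K f] mneg_hom[OF io] hom_mor hom_src by metis
  ultimately show ?thesis by simp
qed

lemma ideal_cancel: assumes K: "ideal X K" and p: "p \<in> K" and s: "madd X p g \<in> K"
  and ph: "p \<in> Hom X A B" and gh: "g \<in> Hom X A B" shows "g \<in> K"
proof -
  interpret G: abgrp "Hom X A B" "madd X" "mneg X" "mzero X A B" using hom_grp hom_obs[OF ph] by blast
  have "madd X (madd X g p) (mneg X p) = g" using G.cancel_r[OF ph gh] by simp
  moreover have "madd X (madd X p g) (mneg X p) \<in> K"
    using ideal_parts(3)[OF K s ideal_neg[OF K p]] madd_hom[OF ph gh] mneg_hom[OF ph] hom_src hom_tgt by metis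
  ultimately show ?thesis using G.comm[OF ph gh] by simp
qed

end

locale thm_ctx = extri +
  fixes F
  assumes injo: "enough_inj_obj X" and projm: "enough_proj_mor X"
    and sf: "additive_subfunctor X F" and eim: "enough_inj_mor X F"
begin

lemma SP: assumes Co: "C \<in> Ob X"
  shows "\<exists>gam k p eta e1 f1 x' phi. real X gam k p \<and> gam \<in> E X C (src X k) \<and>
     real X eta e1 f1 \<and> eta \<in> F \<and> e1 \<in> F_inj X F \<and> e1 \<in> Hom X (src X k) (tgt X e1) \<and>
     real X (push X e1 gam) x' phi \<and> phi \<in> Ph X F \<and> phi \<in> Hom X (tgt X x') C \<and>
     (\<exists>b. tri_morph X gam k p (push X e1 gam) x' phi e1 b (idm X C))"
proof -
  obtain gam k p where rg: "real X gam k p" and tp: "tgt X p = C"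
    and pz: "\<forall>A\<in>Ob X. \<forall>d\<in>E X C A. pull X p d = ezero X (src X p) A"
    using projm Co unfolding enough_proj_mor_def by blast
  define K1 where "K1 = src X k"
  have gE: "gam \<in> E X C K1" using real_E[OF rg] tp K1_def by simp
  have K1o: "K1 \<in> Ob X" using E_obs[OF gE] by simp
  obtain eta e1 f1 where eF: "eta \<in> F" and re: "real X eta e1 f1" and se: "src X e1 = K1"
    and ei: "e1 \<in> F_inj X F"
    using eim K1o unfolding enough_inj_mor_def by blast
  define B1 where "B1 = tgt X e1"
  have etaE: "eta \<in> E X (tgt X f1) K1" using real_E[OF re] se by simp
  have e1h: "e1 \<in> Hom X K1 B1" using real_in[OF re etaE] B1_def by simp
  define del where "del = push X e1 gam"
  have dE: "del \<in> E X C B1" using push_E[OF gE e1h] del_def by simp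
  obtain x' phi where rd: "real X del x' phi" using ar_p2 E_ex[OF dE] by blast
  have ph: "phi \<in> Hom X (tgt X x') C" using real_in[OF rd dE] by simp
  have kh: "k \<in> Hom X K1 (tgt X k)" and pph: "p \<in> Hom X (tgt X k) C" using real_in[OF rg gE] by auto
  have phiPh: "phi \<in> Ph X F"
  proof (rule Ph_I)
    show "phi \<in> Mor X" using ph hom_mor by blast
    fix d A assume d: "d \<in> E X (tgt X phi) A"
    have dE': "d \<in> E X C A" using d hom_tgt[OF ph] by simp
    have "pull X p d = ezero X (src X p) A" using pz E_obs[OF dE'] dE' by blast
    then obtain h where h: "h \<in> Hom X K1 A" and dh: "d = push X h gam"
      using ext_via_defl[OF rg gE dE'] by blast
    have pg: "pull X phi gam \<in> E X (tgt X x') K1" using pull_E[OF gE ph] .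
    have "push X e1 (pull X phi gam) = pull X phi del" using push_pull[OF gE e1h ph] del_def by simp
    also have "\<dots> = ezero X (tgt X x') B1" using pull_defl[OF rd] real_mid[OF rd] real_eA[OF rd] dE
      by (simp add: E_iff)
    finally obtain c where c: "c \<in> Hom X (tgt X x') (tgt X f1)" and pc: "pull X phi gam = pull X c eta"
      using ext_via_infl[OF re etaE pg] B1_def by auto
    have "pull X phi gam \<in> F" using pc sf_pull[OF sf eF etaE c] by simp
    moreover have "pull X phi d = push X h (pull X phi gam)" using dh push_pull[OF gE h ph] by simp
    ultimately show "pull X phi d \<in> F" using sf_push[OF sf _ pg h] by simp
  qed
  have "\<exists>b\<in>Hom X (tgt X k) (tgt X x'). cmp X b k = cmp X x' e1 \<and> cmp X phi b = cmp X (idm X C) p"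
  proof (rule ar_p4[OF rg rd])
    show "e1 \<in> Hom X (eA X gam) (eA X del)" using e1h gE dE by (simp add: E_iff)
    show "idm X C \<in> Hom X (eC X gam) (eC X del)" using idm_hom[OF Co] gE dE by (simp add: E_iff)
    show "push X e1 gam = pull X (idm X C) del" using pull_id[OF dE] del_def by simp
  qed
  then obtain b where b: "b \<in> Hom X (tgt X k) (tgt X x')" "cmp X b k = cmp X x' e1" "cmp X phi b = cmp X (idm X C) p"
    by blast
  have "tri_morph X gam k p del x' phi e1 b (idm X C)" unfolding tri_morph_def
    using e1h b kh real_eA[OF rd] dE tp hom_tgt[OF ph] idm_hom[OF Co] pull_id[OF dE] del_def K1_def
    by (simp add: E_iff)
  then show ?thesis using rg gE K1_def re eF ei e1h B1_def rd del_def phiPh ph by blast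
qed

lemma Ph_I_sub: "Ph X F \<subseteq> perpL X (F_inj X F)" using Ph_sub_perpL[OF sf] .
lemma Finj_Mor: "F_inj X F \<subseteq> Mor X" using Finj_mor by blast

lemma precover: "special_precovering X (perpL X (F_inj X F))"
  unfolding special_precovering_def
proof
  fix C assume Co: "C \<in> Ob X"
  obtain gam k p eta e1 f1 x' phi b where H: "real X gam k p" "gam \<in> E X C (src X k)"
     "e1 \<in> F_inj X F" "real X (push X e1 gam) x' phi" "phi \<in> Ph X F" "phi \<in> Hom X (tgt X x') C"
     "tri_morph X gam k p (push X e1 gam) x' phi e1 b (idm X C)"
    using SP[OF Co] by blast
  have "e1 \<in> perpR X (perpL X (F_inj X F))" using sub_perpRL[OF Finj_Mor] H(3) by blast
  moreover have "tgt X p = C" using real_eC[OF H(1)] H(2) by (simp add: E_iff)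
  moreover have "phi \<in> perpL X (F_inj X F)" using Ph_I_sub H(5) by blast
  moreover have "tgt X phi = C" using hom_tgt[OF H(6)] .
  ultimately show "\<exists>i\<in>perpL X (F_inj X F). tgt X i = C \<and>
     (\<exists>d x y d' x' j b. real X d x y \<and> real X d' x' i \<and> tgt X y = C \<and>
        tri_morph X d x y d' x' i j b (idm X C) \<and> j \<in> perpR X (perpL X (F_inj X F)))"
    using H by blast
qed

lemma PE: assumes Ao: "A \<in> Ob X"
  shows "\<exists>d e n d' x y b phi. real X d e n \<and> src X e = A \<and> real X d' x y \<and> src X x = A \<and>
     tri_morph X d e n d' x y (idm X A) b phi \<and> phi \<in> Ph X F \<and>
     e \<in> perpR X (perpL X (F_inj X F)) \<and> d = pull X phi d' \<and> d' \<in> E X (tgt X phi) A"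
proof -
  obtain eps x y where re: "real X eps x y" and sx: "src X x = A" and I: "inj_obj X (tgt X x)"
    using injo Ao unfolding enough_inj_obj_def by blast
  define C where "C = tgt X y"
  have eE: "eps \<in> E X C A" using real_E[OF re] sx C_def by simp
  have Co: "C \<in> Ob X" using E_obs[OF eE] by simp
  obtain gam k p eta e1 f1 x' phi where H: "real X gam k p" "gam \<in> E X C (src X k)"
     "e1 \<in> F_inj X F" "e1 \<in> Hom X (src X k) (tgt X e1)" "real X (push X e1 gam) x' phi" "phi \<in> Ph X F"
     "phi \<in> Hom X (tgt X x') C"
    using SP[OF Co] by blast
  define X' where "X' = tgt X x'"
  define del where "del = push X e1 gam"
  have dE: "del \<in> E X C (tgt X e1)" using push_E[OF H(2) H(4)] del_def by simp
  define d where "d = pull X phi eps"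
  have ph: "phi \<in> Hom X X' C" using H(7) X'_def by simp
  have ddE: "d \<in> E X X' A" using pull_E[OF eE ph] d_def by simp
  obtain e n where rd: "real X d e n" using ar_p2 E_ex[OF ddE] by blast
  have eh: "e \<in> Hom X A (tgt X e)" using real_in[OF rd ddE] by simp
  define I where "I = perpL X (F_inj X F)"
  have Iid: "ideal X I" using perpL_ideal[OF Finj_Mor] I_def by simp
  have eperp: "e \<in> perpR X I"
  proof (rule perpR_I)
    show "e \<in> Mor X" using eh hom_mor by blast
    fix m dl assume m: "m \<in> I" and dl: "dl \<in> E X (tgt X m) (src X e)"
    have mh: "m \<in> Hom X (src X m) (tgt X m)" using perpL_mor m I_def mor_hom by blast
    have dlE: "dl \<in> E X (tgt X m) A" using dl hom_src[OF eh] by simp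
    obtain c0 where c0: "c0 \<in> Hom X (tgt X m) C" and dc: "dl = pull X c0 eps"
      using inj_factor[OF I re eE dlE] by blast
    have cm: "cmp X c0 m \<in> I" using ideal_parts(4)[OF Iid m] c0 hom_mor hom_src by metis
    have cmh: "cmp X c0 m \<in> Hom X (src X m) C" using cmp_hom[OF mh c0] .
    have "pull X (cmp X c0 m) del = ezero X (src X (cmp X c0 m)) (tgt X e1)"
      using perpL_D[of "cmp X c0 m" "F_inj X F" e1 gam] cm I_def H(3) H(2) hom_tgt[OF cmh] hom_src[OF H(4)] del_def
      by simp
    then obtain n' where n': "n' \<in> Hom X (src X m) X'" "cmp X phi n' = cmp X c0 m"
      using ext_defl[OF H(5)[folded del_def] dE cmh] hom_src[OF cmh] X'_def by auto
    have "pull X m (push X e dl) = pull X m (pull X c0 (push X e eps))" using dc push_pull[OF eE eh c0] by simp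
    also have "\<dots> = pull X (cmp X c0 m) (push X e eps)" using pull_cmp[OF push_E[OF eE eh] c0 mh] by simp
    also have "\<dots> = pull X n' (pull X phi (push X e eps))" using n' pull_cmp[OF push_E[OF eE eh] ph n'(1)] by simp
    also have "\<dots> = pull X n' (push X e d)" using push_pull[OF eE eh ph] d_def by simp
    also have "\<dots> = pull X n' (ezero X X' (tgt X e))" using push_infl[OF rd] ddE by (simp add: E_iff)
    also have "\<dots> = ezero X (src X m) (tgt X e)" using pull_ezero[OF n'(1)] hom_obs[OF eh] by simp
    finally show "pull X m (push X e dl) = ezero X (src X m) (tgt X e)" .
  qed
  have "\<exists>b\<in>Hom X (tgt X e) (tgt X x). cmp X b e = cmp X x (idm X A) \<and> cmp X y b = cmp X phi n"
  proof (rule ar_p4[OF rd re])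
    show "idm X A \<in> Hom X (eA X d) (eA X eps)" using idm_hom[OF Ao] ddE eE by (simp add: E_iff)
    show "phi \<in> Hom X (eC X d) (eC X eps)" using ph ddE eE by (simp add: E_iff)
    show "push X (idm X A) d = pull X phi eps" using push_id[OF ddE] d_def by simp
  qed
  then obtain b where b: "b \<in> Hom X (tgt X e) (tgt X x)" "cmp X b e = cmp X x (idm X A)" "cmp X y b = cmp X phi n"
    by blast
  have tm: "tri_morph X d e n eps x y (idm X A) b phi" unfolding tri_morph_def
    using b hom_src[OF eh] sx idm_hom[OF Ao] real_eC[OF rd] ddE C_def ph push_id[OF ddE] d_def
    by (simp add: E_iff)
  show ?thesis
    using rd hom_src[OF eh] re sx tm H(6) eperp I_def d_def eE hom_tgt[OF ph] by blast
qed

lemma preenvelope: "special_preenveloping X (perpR X (perpL X (F_inj X F)))"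
  unfolding special_preenveloping_def
proof
  fix A assume Ao: "A \<in> Ob X"
  obtain d e n d' x y b phi where H: "real X d e n" "src X e = A" "real X d' x y" "src X x = A"
     "tri_morph X d e n d' x y (idm X A) b phi" "phi \<in> Ph X F"
     "e \<in> perpR X (perpL X (F_inj X F))"
    using PE[OF Ao] by blast
  have "phi \<in> perpL X (perpR X (perpL X (F_inj X F)))"
    using H(6) Ph_I_sub sub_perpLR[of "perpL X (F_inj X F)"] perpL_mor by blast
  then show "\<exists>e\<in>perpR X (perpL X (F_inj X F)). src X e = A \<and>
     (\<exists>d y d' x' y' b j. real X d e y \<and> real X d' x' y' \<and> src X x' = A \<and>
        tri_morph X d e y d' x' y' (idm X A) b j \<and> j \<in> perpL X (perpR X (perpL X (F_inj X F))))"
    using H by blast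
qed

end

context thm_ctx begin

lemma propC_perpR: "propC X (perpR X (Ph X F))"
  unfolding propC_def
proof (intro allI impI)
  fix g x y d x' y' a b c
  assume H: "real X g x y \<and> real X d x' y' \<and> inj_obj X (tgt X y) \<and>
      tri_morph X g x y d x' y' a b c \<and> a \<in> perpR X (Ph X F)"
  then have rg: "real X g x y" and rd: "real X d x' y'" and I: "inj_obj X (tgt X y)"
    and t: "tri_morph X g x y d x' y' a b c" and a: "a \<in> perpR X (Ph X F)" by auto
  note T = tm_unf[OF t]
  define A where "A = src X x"
  have gE: "g \<in> E X (tgt X y) A" using real_E[OF rg] A_def by simp
  have xh: "x \<in> Hom X A (tgt X x)" using real_in[OF rg gE] by simp
  have ah: "a \<in> Hom X A (src X x')" using T A_def by simp
  have x'h: "x' \<in> Hom X (src X x') (tgt X x')" using real_x[OF rd] real_mid[OF rd] by simp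
  have bh: "b \<in> Hom X (tgt X x) (tgt X x')" using T by simp
  show "b \<in> perpR X (Ph X F)"
  proof (rule perpR_I)
    show "b \<in> Mor X" using bh hom_mor by blast
    fix m dl assume m: "m \<in> Ph X F" and dl: "dl \<in> E X (tgt X m) (src X b)"
    have mh: "m \<in> Hom X (src X m) (tgt X m)" using Ph_mor[OF m] mor_hom by blast
    have dlE: "dl \<in> E X (tgt X m) (tgt X x)" using dl hom_src[OF bh] by simp
    obtain eps where eE: "eps \<in> E X (tgt X m) A" and de: "dl = push X x eps"
      using inj_mid[OF rg gE I dlE] by blast
    have "push X b dl = push X (cmp X b x) eps" using de push_cmp[OF eE xh bh] by simp
    also have "\<dots> = push X x' (push X a eps)" using T push_cmp[OF eE ah x'h] by simp
    finally have "pull X m (push X b dl) = push X x' (pull X m (push X a eps))"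
      using push_pull[OF push_E[OF eE ah] x'h mh] by simp
    also have "\<dots> = push X x' (ezero X (src X m) (tgt X a))" using perpR_D[OF a m] eE hom_src[OF ah] by simp
    also have "\<dots> = ezero X (src X m) (tgt X x')" using push_ezero[OF x'h] hom_obs[OF mh] hom_tgt[OF ah] by simp
    finally show "pull X m (push X b dl) = ezero X (src X m) (tgt X b)" using hom_tgt[OF bh] by simp
  qed
qed

end

context thm_ctx begin

lemma minimal: assumes K: "ideal X K" and FK: "F_inj X F \<subseteq> K" and pC: "propC X K"
  and g: "g \<in> perpR X (Ph X F)" shows "g \<in> K"
proof -
  define A where "A = src X g"
  define Y where "Y = tgt X g"
  have gh: "g \<in> Hom X A Y" using perpR_mor[OF g] mor_hom A_def Y_def by blast
  have Ao: "A \<in> Ob X" "Y \<in> Ob X" using hom_obs[OF gh] by auto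
  obtain eps x y where re: "real X eps x y" and sx: "src X x = A" and I: "inj_obj X (tgt X x)"
    using injo Ao unfolding enough_inj_obj_def by blast
  define C where "C = tgt X y"
  define I0 where "I0 = tgt X x"
  have eE: "eps \<in> E X C A" using real_E[OF re] sx C_def by simp
  have xh: "x \<in> Hom X A I0" and yh: "y \<in> Hom X I0 C" using real_in[OF re eE] I0_def by auto
  have Co: "C \<in> Ob X" "I0 \<in> Ob X" using E_obs[OF eE] hom_obs[OF xh] by auto
  obtain gam k p eta e1 f1 x' phi where H: "real X gam k p" "gam \<in> E X C (src X k)"
     "e1 \<in> F_inj X F" "e1 \<in> Hom X (src X k) (tgt X e1)" "real X (push X e1 gam) x' phi" "phi \<in> Ph X F"
     "phi \<in> Hom X (tgt X x') C"
    using SP[OF Co(1)] by blast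
  define K1 where "K1 = src X k"
  define B1 where "B1 = tgt X e1"
  define X' where "X' = tgt X x'"
  define del where "del = push X e1 gam"
  have gE: "gam \<in> E X C K1" using H(2) K1_def by simp
  have e1h: "e1 \<in> Hom X K1 B1" using H(4) K1_def B1_def by simp
  have dE: "del \<in> E X C B1" using push_E[OF gE e1h] del_def by simp
  have rdel: "real X del x' phi" using H(5) del_def by simp
  have ph: "phi \<in> Hom X X' C" using H(7) X'_def by simp
  have K1o: "K1 \<in> Ob X" "B1 \<in> Ob X" using hom_obs[OF e1h] by auto
  define zeta where "zeta = push X g eps"
  have zE: "zeta \<in> E X C Y" using push_E[OF eE gh] zeta_def by simp
  have "pull X phi zeta = ezero X (src X phi) Y"
    using perpR_D[OF g H(6)] eE hom_tgt[OF ph] A_def Y_def zeta_def by simp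
  then obtain w1 where w1: "w1 \<in> Hom X B1 Y" and zw: "zeta = push X w1 del"
    using ext_via_defl[OF rdel dE zE] by blast
  define tau where "tau = pull X y gam"
  have tE: "tau \<in> E X I0 K1" using pull_E[OF gE yh] tau_def by simp
  obtain u0 w where rt: "real X tau u0 w" using ar_p2 E_ex[OF tE] by blast
  define M where "M = tgt X u0"
  have u0h: "u0 \<in> Hom X K1 M" and wh: "w \<in> Hom X M I0" using real_in[OF rt tE] M_def by auto
  have tw: "tgt X w = tgt X x" using hom_tgt[OF wh] I0_def by simp
  have "\<exists>h' dd e d''. real X d'' h' (cmp X y w) \<and>
          dd \<in> Hom X (src X u0) (src X h') \<and> e \<in> Hom X (src X h') (src X x) \<and>
          cmp X h' dd = u0 \<and> cmp X w h' = cmp X x e \<and>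
          real X (pull X x tau) dd e \<and>
          eps = push X e d'' \<and> push X dd tau = pull X y d''"
    using et4op rt re tw unfolding ET4op_def by blast
  then obtain h' dd e d'' where E4: "real X d'' h' (cmp X y w)"
    "dd \<in> Hom X (src X u0) (src X h')" "e \<in> Hom X (src X h') (src X x)"
    "cmp X h' dd = u0" "real X (pull X x tau) dd e"
    "eps = push X e d''" "push X dd tau = pull X y d''" by blast
  define E2 where "E2 = src X h'"
  have ddh: "dd \<in> Hom X K1 E2" using E4(2) hom_src[OF u0h] E2_def by simp
  have eh: "e \<in> Hom X E2 A" using E4(3) sx E2_def by simp
  have ywh: "cmp X y w \<in> Hom X M C" using cmp_hom[OF wh yh] .
  have h'h: "h' \<in> Hom X E2 M" using real_x[OF E4(1)] hom_src[OF ywh] E2_def by simp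
  have d''E: "d'' \<in> E X C E2" using real_E[OF E4(1)] hom_tgt[OF ywh] E2_def by simp
  have E2o: "E2 \<in> Ob X" using hom_obs[OF eh] by simp
  \<comment> \<open>the split triangle K1 -> E2 -> A\<close>
  have xt: "pull X x tau = ezero X A K1"
    using tau_def pull_cmp[OF gE yh xh] consec[OF re] sx C_def pull_mzero[OF gE Ao(1)] by simp
  have zE2: "ezero X A K1 \<in> E X A K1" using ezero_E Ao K1o by blast
  have rz: "real X (ezero X A K1) dd e" using E4(5) xt by simp
  obtain sig where sig: "sig \<in> Hom X A E2" "cmp X e sig = idm X A"
    using ext_defl[OF rz zE2 idm_hom[OF Ao(1)]] pull_id[OF zE2] hom_tgt[OF ddh] by auto
  obtain r0 where r0: "r0 \<in> Hom X E2 K1" "cmp X r0 dd = idm X K1"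
    using ext_infl[OF rz zE2 idm_hom[OF K1o(1)]] push_id[OF zE2] hom_tgt[OF ddh] by auto
  have edd: "cmp X e dd = mzero X K1 A" using consec[OF rz] hom_src[OF ddh] hom_tgt[OF eh] by simp
  define xi where "xi = push X r0 d''"
  have xiE: "xi \<in> E X C K1" using push_E[OF d''E r0(1)] xi_def by simp
  have pyxi: "pull X y xi = tau"
  proof -
    have "pull X y xi = push X r0 (pull X y d'')" using push_pull[OF d''E r0(1) yh] xi_def by simp
    also have "\<dots> = push X r0 (push X dd tau)" using E4(7) by simp
    also have "\<dots> = push X (cmp X r0 dd) tau" using push_cmp[OF tE ddh r0(1)] by simp
    finally show ?thesis using r0(2) push_id[OF tE] by simp
  qed
  interpret GC: abgrp "E X C K1" "eadd X" "eneg X" "ezero X C K1" using E_grp Co K1o by blast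
  interpret GI: abgrp "E X I0 K1" "eadd X" "eneg X" "ezero X I0 K1" using E_grp Co K1o by blast
  define chi where "chi = eadd X gam (eneg X xi)"
  have chiE: "chi \<in> E X C K1" using GC.cl[OF gE GC.ncl[OF xiE]] chi_def by simp
  have "pull X y chi = eadd X tau (eneg X tau)"
    using pull_eadd[OF gE GC.ncl[OF xiE] yh] pull_eneg[OF xiE yh] pyxi tau_def chi_def by simp
  then have "pull X y chi = ezero X (src X y) K1" using GI.rinv[OF tE] hom_src[OF yh] by simp
  then obtain h where hh: "h \<in> Hom X A K1" and ch: "chi = push X h eps"
    using ext_via_defl[OF re eE chiE] sx by auto
  have heE: "push X h eps \<in> E X C K1" using push_E[OF eE hh] .
  have gam_eq: "gam = eadd X xi (push X h eps)" using GC.solve[OF xiE gE heE] ch chi_def by simp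
  define rho where "rho = madd X r0 (cmp X h e)"
  have heh: "cmp X h e \<in> Hom X E2 K1" using cmp_hom[OF eh hh] .
  have rhoh: "rho \<in> Hom X E2 K1" using madd_hom[OF r0(1) heh] rho_def by simp
  have prho: "push X rho d'' = gam"
    using push_madd[OF d''E r0(1) heh] push_cmp[OF d''E eh hh] E4(6) xi_def gam_eq rho_def by simp
  define a where "a = cmp X (mneg X w1) e1"
  have nw1: "mneg X w1 \<in> Hom X B1 Y" using mneg_hom[OF w1] .
  have ah: "a \<in> Hom X K1 Y" using cmp_hom[OF e1h nw1] a_def by simp
  have e1K: "e1 \<in> K" using H(3) FK by blast
  have aK: "a \<in> K" unfolding a_def by (rule ideal_parts(4)[OF K e1K]) (use nw1 e1h in \<open>auto simp: Hom_iff\<close>)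
  have pa: "push X a gam = eneg X zeta"
    using push_cmp[OF gE e1h nw1] push_mneg[OF dE w1] zw del_def a_def by simp
  define beta' where "beta' = madd X (cmp X a rho) (cmp X g e)"
  have arh: "cmp X a rho \<in> Hom X E2 Y" using cmp_hom[OF rhoh ah] .
  have geh: "cmp X g e \<in> Hom X E2 Y" using cmp_hom[OF eh gh] .
  have b'h: "beta' \<in> Hom X E2 Y" using madd_hom[OF arh geh] beta'_def by simp
  interpret GY: abgrp "E X C Y" "eadd X" "eneg X" "ezero X C Y" using E_grp Co Ao by blast
  have "push X beta' d'' = eadd X (push X a (push X rho d'')) (push X g (push X e d''))"
    using push_madd[OF d''E arh geh] push_cmp[OF d''E rhoh ah] push_cmp[OF d''E eh gh] beta'_def by simp
  also have "\<dots> = eadd X (eneg X zeta) zeta" using prho pa E4(6) zeta_def by simp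
  also have "\<dots> = ezero X C Y" using GY.linv[OF zE] .
  finally obtain beta where bh: "beta \<in> Hom X M Y" and bb: "cmp X beta h' = beta'"
    using ext_infl[OF E4(1) d''E b'h] hom_tgt[OF h'h] by auto
  \<comment> \<open>beta in K via property (C)\<close>
  have bu: "cmp X beta u0 = madd X (cmp X (cmp X a rho) dd) (cmp X (cmp X g e) dd)"
    using E4(4) cmp_assoc[OF ddh h'h bh] bb cmp_madd_r[OF arh geh ddh] beta'_def by simp
  have "cmp X (cmp X g e) dd = mzero X K1 Y"
    using cmp_assoc[OF ddh eh gh] edd cmp_mzero_r[OF gh K1o(1)] by simp
  moreover have "cmp X (cmp X a rho) dd \<in> K"
    using ideal_parts(5)[OF K ideal_parts(5)[OF K aK]] rhoh ddh hom_mor hom_src hom_tgt ah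
    by (metis cmp_hom)
  moreover have "mzero X K1 Y \<in> K" using ideal_parts(2)[OF K K1o(1) Ao(2)] .
  moreover have "cmp X (cmp X a rho) dd \<in> Hom X K1 Y" using cmp_hom[OF ddh arh] .
  ultimately have buK: "cmp X beta u0 \<in> K"
    using bu ideal_parts(3)[OF K] mzero_hom[OF K1o(1) Ao(2)] hom_src hom_tgt by metis
  obtain Z where Z: "zero_obj X Z" using zero_ex by blast
  have sY: "real X (ezero X Z Y) (idm X Y) (mzero X Y Z)" using split1[OF Z Ao(2)] .
  have buh: "cmp X beta u0 \<in> Hom X K1 Y" using cmp_hom[OF u0h bh] .
  have "\<exists>c. tri_morph X tau u0 w (ezero X Z Y) (idm X Y) (mzero X Y Z) (cmp X beta u0) beta c"
  proof (rule ET3r[OF rt sY])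
    show "cmp X beta u0 \<in> Hom X (src X u0) (src X (idm X Y))"
      using buh hom_src[OF u0h] hom_src[OF idm_hom[OF Ao(2)]] by simp
    show "beta \<in> Hom X (tgt X u0) (tgt X (idm X Y))"
      using bh M_def hom_tgt[OF idm_hom[OF Ao(2)]] by simp
    show "cmp X beta u0 = cmp X (idm X Y) (cmp X beta u0)" using id_l[OF buh] by simp
  qed
  then obtain c where tc: "tri_morph X tau u0 w (ezero X Z Y) (idm X Y) (mzero X Y Z) (cmp X beta u0) beta c" by blast
  have Iw: "inj_obj X (tgt X w)" using I tw by simp
  have bK: "beta \<in> K" using pC rt sY Iw tc buK unfolding propC_def by blast
  define m where "m = cmp X h' sig"
  have mh: "m \<in> Hom X A M" using cmp_hom[OF sig(1) h'h] m_def by simp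
  have bmK: "cmp X beta m \<in> K" using ideal_parts(5)[OF K bK] mh bh hom_mor hom_src hom_tgt by metis
  define p1 where "p1 = cmp X (cmp X a rho) sig"
  have p1h: "p1 \<in> Hom X A Y" using cmp_hom[OF sig(1) arh] p1_def by simp
  have p1K: "p1 \<in> K"
    using ideal_parts(5)[OF K ideal_parts(5)[OF K aK]] rhoh sig(1) hom_mor hom_src hom_tgt ah p1_def
    by (metis cmp_hom)
  have "cmp X beta m = madd X p1 (cmp X (cmp X g e) sig)"
    using cmp_assoc[OF sig(1) h'h bh] bb cmp_madd_r[OF arh geh sig(1)] beta'_def m_def p1_def by simp
  also have "cmp X (cmp X g e) sig = g" using cmp_assoc[OF sig(1) eh gh] sig(2) id_r[OF gh] by simp
  finally have "madd X p1 g \<in> K" using bmK by simp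
  then show ?thesis using ideal_cancel[OF K p1K _ p1h gh] by simp
qed

end

context thm_ctx begin

lemma star_sub: "star X (Ph X F) \<subseteq> F"
proof
  fix e assume "e \<in> star X (Ph X F)"
  then obtain m d where m: "m \<in> Ph X F" and d: "d \<in> etcat.Ex X" "eC X d = tgt X m" and ed: "e = pull X m d"
    using star_E by blast
  show "e \<in> F" using Ph_D[OF m] ex_E[OF d(1)] d(2) ed by simp
qed

lemma star_sf: "additive_subfunctor X (star X (Ph X F))"
  unfolding additive_subfunctor_def
proof (intro conjI ballI impI allI)
  show "star X (Ph X F) \<subseteq> etcat.Ex X"
  proof
    fix e assume "e \<in> star X (Ph X F)"
    then obtain m d where m: "m \<in> Ph X F" and d: "d \<in> etcat.Ex X" "eC X d = tgt X m" and ed: "e = pull X m d"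
      using star_E by blast
    show "e \<in> etcat.Ex X" using pull_E[OF ex_E[OF d(1)]] Ph_mor[OF m] mor_hom d(2) ed E_ex by metis
  qed
next
  fix C A assume CA: "C \<in> Ob X" "A \<in> Ob X"
  have "pull X (mzero X C C) (ezero X C A) \<in> star X (Ph X F)"
    using star_I[OF Ph_mzero[OF sf CA(1) CA(1)]] ezero_E[OF CA] hom_tgt[OF mzero_hom[OF CA(1) CA(1)]] by simp
  then show "ezero X C A \<in> star X (Ph X F)" using pull_mzero[OF ezero_E[OF CA] CA(1)] by simp
next
  fix d1 d2 assume d1: "d1 \<in> star X (Ph X F)" and d2: "d2 \<in> star X (Ph X F)"
    and eq: "eC X d1 = eC X d2 \<and> eA X d1 = eA X d2"
  obtain m1 del1 where m1: "m1 \<in> Ph X F" and del1: "del1 \<in> etcat.Ex X" "eC X del1 = tgt X m1" and e1: "d1 = pull X m1 del1"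
    using star_E[OF d1] by blast
  obtain m2 del2 where m2: "m2 \<in> Ph X F" and del2: "del2 \<in> etcat.Ex X" "eC X del2 = tgt X m2" and e2: "d2 = pull X m2 del2"
    using star_E[OF d2] by blast
  define W where "W = src X m1"
  define A where "A = eA X del1"
  define C1 where "C1 = tgt X m1"
  define C2 where "C2 = tgt X m2"
  have m1h: "m1 \<in> Hom X W C1" using Ph_mor[OF m1] mor_hom W_def C1_def by blast
  have D1: "del1 \<in> E X C1 A" using ex_E[OF del1(1)] del1(2) A_def C1_def by simp
  have d1E: "d1 \<in> E X W A" using pull_E[OF D1 m1h] e1 by simp
  have m2h0: "m2 \<in> Hom X (src X m2) C2" using Ph_mor[OF m2] mor_hom C2_def by blast
  have D2': "del2 \<in> E X C2 (eA X del2)" using ex_E[OF del2(1)] del2(2) C2_def by simp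
  have d2E': "d2 \<in> E X (src X m2) (eA X del2)" using pull_E[OF D2' m2h0] e2 by simp
  have sm: "src X m2 = W" "eA X del2 = A" using d1E d2E' eq by (auto simp: E_iff)
  have m2h: "m2 \<in> Hom X W C2" using m2h0 sm by simp
  have D2: "del2 \<in> E X C2 A" using D2' sm by simp
  have d2E: "d2 \<in> E X W A" using d2E' sm by simp
  have Ob: "C1 \<in> Ob X" "C2 \<in> Ob X" "W \<in> Ob X" "A \<in> Ob X" using hom_obs m1h m2h E_obs D1 by auto
  obtain S i1 i2 p1 p2 where bp: "is_biprod X C1 C2 S i1 i2 p1 p2" using biprod_ex[OF Ob(1,2)] by blast
  then have B: "i1 \<in> Hom X C1 S" "i2 \<in> Hom X C2 S" "p1 \<in> Hom X S C1" "p2 \<in> Hom X S C2"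
    "cmp X p1 i1 = idm X C1" "cmp X p2 i2 = idm X C2"
    "cmp X p1 i2 = mzero X C2 C1" "cmp X p2 i1 = mzero X C1 C2" unfolding is_biprod_def by auto
  define Dl where "Dl = eadd X (pull X p1 del1) (pull X p2 del2)"
  have P1: "pull X p1 del1 \<in> E X S A" using pull_E[OF D1 B(3)] .
  have P2: "pull X p2 del2 \<in> E X S A" using pull_E[OF D2 B(4)] .
  have DlE: "Dl \<in> E X S A" using eadd_E[OF P1 P2] Dl_def by simp
  interpret G1: abgrp "E X C1 A" "eadd X" "eneg X" "ezero X C1 A" using E_grp Ob by blast
  interpret G2: abgrp "E X C2 A" "eadd X" "eneg X" "ezero X C2 A" using E_grp Ob by blast
  have pi1: "pull X i1 Dl = del1"
  proof -
    have "pull X i1 Dl = eadd X (pull X (cmp X p1 i1) del1) (pull X (cmp X p2 i1) del2)"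
      using pull_eadd[OF P1 P2 B(1)] pull_cmp[OF D1 B(3) B(1)] pull_cmp[OF D2 B(4) B(1)] Dl_def by simp
    also have "\<dots> = eadd X del1 (ezero X C1 A)" using B pull_id[OF D1] pull_mzero[OF D2 Ob(1)] by simp
    finally show ?thesis using G1.rz[OF D1] by simp
  qed
  have pi2: "pull X i2 Dl = del2"
  proof -
    have "pull X i2 Dl = eadd X (pull X (cmp X p1 i2) del1) (pull X (cmp X p2 i2) del2)"
      using pull_eadd[OF P1 P2 B(2)] pull_cmp[OF D1 B(3) B(2)] pull_cmp[OF D2 B(4) B(2)] Dl_def by simp
    also have "\<dots> = eadd X (ezero X C2 A) del2" using B pull_id[OF D2] pull_mzero[OF D1 Ob(2)] by simp
    finally show ?thesis using G2.lz[OF D2] by simp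
  qed
  have im1: "cmp X i1 m1 \<in> Hom X W S" using cmp_hom[OF m1h B(1)] .
  have im2: "cmp X i2 m2 \<in> Hom X W S" using cmp_hom[OF m2h B(2)] .
  have Mph: "madd X (cmp X i1 m1) (cmp X i2 m2) \<in> Ph X F"
    using Ph_madd[OF sf Ph_lcomp[OF m1] Ph_lcomp[OF m2] im1 im2] B(1,2) hom_tgt m1h m2h by simp
  have "pull X (madd X (cmp X i1 m1) (cmp X i2 m2)) Dl = eadd X d1 d2"
    using pull_madd[OF DlE im1 im2] pull_cmp[OF DlE B(1) m1h] pull_cmp[OF DlE B(2) m2h] pi1 pi2 e1 e2 by simp
  moreover have "pull X (madd X (cmp X i1 m1) (cmp X i2 m2)) Dl \<in> star X (Ph X F)"
    using star_I[OF Mph] DlE hom_tgt[OF madd_hom[OF im1 im2]] by simp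
  ultimately show "eadd X d1 d2 \<in> star X (Ph X F)" by simp
next
  fix d assume d: "d \<in> star X (Ph X F)"
  obtain m del where m: "m \<in> Ph X F" and del: "del \<in> etcat.Ex X" "eC X del = tgt X m" and e: "d = pull X m del"
    using star_E[OF d] by blast
  have mh: "m \<in> Hom X (src X m) (tgt X m)" using Ph_mor[OF m] mor_hom by blast
  have D: "del \<in> E X (tgt X m) (eA X del)" using ex_E[OF del(1)] del(2) by simp
  show "eneg X d \<in> star X (Ph X F)" using pull_eneg[OF D mh] star_I[OF m eneg_E[OF D]] e by simp
next
  fix d c assume d: "d \<in> star X (Ph X F)" and c: "c \<in> Mor X" and tc: "tgt X c = eC X d"
  obtain m del where m: "m \<in> Ph X F" and del: "del \<in> etcat.Ex X" "eC X del = tgt X m" and e: "d = pull X m del"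
    using star_E[OF d] by blast
  have mh: "m \<in> Hom X (src X m) (tgt X m)" using Ph_mor[OF m] mor_hom by blast
  have D: "del \<in> E X (tgt X m) (eA X del)" using ex_E[OF del(1)] del(2) by simp
  have ch: "c \<in> Hom X (src X c) (src X m)" using c tc e pull_E[OF D mh] mor_hom by (metis E_iff)
  have "pull X c d = pull X (cmp X m c) del" using pull_cmp[OF D mh ch] e by simp
  moreover have "cmp X m c \<in> Ph X F" using Ph_rcomp[OF sf m ch] .
  moreover have "del \<in> E X (tgt X (cmp X m c)) (eA X del)" using D hom_tgt[OF cmp_hom[OF ch mh]] by simp
  ultimately show "pull X c d \<in> star X (Ph X F)" using star_I by metis
next
  fix d a assume d: "d \<in> star X (Ph X F)" and a: "a \<in> Mor X" and sa: "src X a = eA X d"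
  obtain m del where m: "m \<in> Ph X F" and del: "del \<in> etcat.Ex X" "eC X del = tgt X m" and e: "d = pull X m del"
    using star_E[OF d] by blast
  have mh: "m \<in> Hom X (src X m) (tgt X m)" using Ph_mor[OF m] mor_hom by blast
  have D: "del \<in> E X (tgt X m) (eA X del)" using ex_E[OF del(1)] del(2) by simp
  have ah: "a \<in> Hom X (eA X del) (tgt X a)" using a sa e pull_E[OF D mh] mor_hom by (metis E_iff)
  have "push X a d = pull X m (push X a del)" using push_pull[OF D ah mh] e by simp
  then show "push X a d \<in> star X (Ph X F)" using star_I[OF m push_E[OF D ah]] by simp
qed

lemma star_special: "enough_special_inj_mor X (star X (Ph X F))"
  unfolding enough_special_inj_mor_def
proof
  fix A assume Ao: "A \<in> Ob X"
  obtain d e n d' x y b phi where H: "real X d e n" "src X e = A" "real X d' x y" "src X x = A"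
     "tri_morph X d e n d' x y (idm X A) b phi" "phi \<in> Ph X F"
     "e \<in> perpR X (perpL X (F_inj X F))" "d = pull X phi d'" "d' \<in> E X (tgt X phi) A"
    using PE[OF Ao] by blast
  have dS: "d \<in> star X (Ph X F)" using star_I[OF H(6) H(9)] H(8) by simp
  have "e \<in> perpR X (Ph X F)" using H(7) perpR_anti[OF Ph_I_sub] by blast
  then have eF: "e \<in> F_inj X (star X (Ph X F))" using perpR_eq_Finj_star by simp
  have "phi \<in> Ph X (star X (Ph X F))"
  proof (rule Ph_I)
    show "phi \<in> Mor X" using Ph_mor[OF H(6)] .
    fix dl B assume "dl \<in> E X (tgt X phi) B"
    then show "pull X phi dl \<in> star X (Ph X F)" using star_I[OF H(6)] by simp
  qed
  then show "\<exists>d e y. d \<in> star X (Ph X F) \<and> real X d e y \<and> src X e = A \<and>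
      e \<in> F_inj X (star X (Ph X F)) \<and>
      (\<exists>d' x' y' b \<phi>. real X d' x' y' \<and> src X x' = A \<and>
          tri_morph X d e y d' x' y' (idm X A) b \<phi> \<and> \<phi> \<in> Ph X (star X (Ph X F)))"
    using dS H eF by blast
qed

lemma maximal: assumes sf': "additive_subfunctor X F'" and sub: "F' \<subseteq> F"
  and es: "enough_special_inj_mor X F'" shows "F' \<subseteq> star X (Ph X F)"
proof
  fix del assume del: "del \<in> F'"
  define A where "A = eA X del"
  define C where "C = eC X del"
  have dE: "del \<in> E X C A" using sf_parts(1)[OF sf'] del A_def C_def by (auto simp: E_iff)
  have Ao: "A \<in> Ob X" using E_obs[OF dE] by simp
  obtain d e y d' x' y' b phi where H: "d \<in> F'" "real X d e y" "src X e = A" "e \<in> F_inj X F'"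
    "real X d' x' y'" "src X x' = A" "tri_morph X d e y d' x' y' (idm X A) b phi" "phi \<in> Ph X F'"
    using es Ao unfolding enough_special_inj_mor_def by blast
  have dE2: "d \<in> E X (tgt X y) A" using real_E[OF H(2)] H(3) by simp
  have "push X e del = ezero X C (tgt X e)" using Finj_D[OF H(4) del] A_def C_def H(3) by simp
  then obtain c where c: "c \<in> Hom X C (tgt X y)" and dc: "del = pull X c d"
    using ext_via_infl[OF H(2) dE2 dE] by blast
  note T = tm_unf[OF H(7)]
  have phh: "phi \<in> Hom X (tgt X y) (tgt X y')" using T by simp
  have d'E: "d' \<in> E X (tgt X y') A" using real_E[OF H(5)] H(6) by simp
  have "d = pull X phi d'" using T push_id[OF dE2] by simp
  then have "del = pull X (cmp X phi c) d'" using dc pull_cmp[OF d'E phh c] by simp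
  moreover have "phi \<in> Ph X F" using H(8) Ph_mono[OF sub] by blast
  then have "cmp X phi c \<in> Ph X F" using Ph_rcomp[OF sf] c hom_src[OF phh] by simp
  moreover have "d' \<in> E X (tgt X (cmp X phi c)) A" using d'E hom_tgt[OF cmp_hom[OF c phh]] by simp
  ultimately show "del \<in> star X (Ph X F)" using star_I by metis
qed

lemma main: "(ideal X (perpL X (F_inj X F)) \<and> ideal X (perpR X (perpL X (F_inj X F))) \<and>
          complete_cotorsion_pair X (perpL X (F_inj X F)) (perpR X (perpL X (F_inj X F))))
       \<and> (perpR X (Ph X F) = F_inj X (star X (Ph X F)) \<and>
          ideal X (perpR X (Ph X F)) \<and> F_inj X F \<subseteq> perpR X (Ph X F) \<and>
          propC X (perpR X (Ph X F)) \<and>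
          (\<forall>K. ideal X K \<and> F_inj X F \<subseteq> K \<and> propC X K \<longrightarrow> perpR X (Ph X F) \<subseteq> K))
       \<and> (additive_subfunctor X (star X (Ph X F)) \<and> star X (Ph X F) \<subseteq> F \<and>
          enough_special_inj_mor X (star X (Ph X F)) \<and>
          (\<forall>F'. additive_subfunctor X F' \<and> F' \<subseteq> F \<and> enough_special_inj_mor X F'
                 \<longrightarrow> F' \<subseteq> star X (Ph X F)))"
proof (intro conjI allI impI)
  show "ideal X (perpL X (F_inj X F))" using perpL_ideal[OF Finj_Mor] .
  show "ideal X (perpR X (perpL X (F_inj X F)))" using perpR_ideal perpL_mor by blast
  show "complete_cotorsion_pair X (perpL X (F_inj X F)) (perpR X (perpL X (F_inj X F)))"
    unfolding complete_cotorsion_pair_def cotorsion_pair_def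
    using perpL_triple[OF Finj_Mor] precover preenvelope by simp
  show "perpR X (Ph X F) = F_inj X (star X (Ph X F))" using perpR_eq_Finj_star .
  show "ideal X (perpR X (Ph X F))" using perpR_ideal Ph_mor by blast
  show "F_inj X F \<subseteq> perpR X (Ph X F)" using Finj_sub_perpR_Ph .
  show "propC X (perpR X (Ph X F))" using propC_perpR .
  show "\<And>K. ideal X K \<and> F_inj X F \<subseteq> K \<and> propC X K \<Longrightarrow> perpR X (Ph X F) \<subseteq> K"
    using minimal by blast
  show "additive_subfunctor X (star X (Ph X F))" using star_sf .
  show "star X (Ph X F) \<subseteq> F" using star_sub .
  show "enough_special_inj_mor X (star X (Ph X F))" using star_special .
  show "\<And>F'. additive_subfunctor X F' \<and> F' \<subseteq> F \<and> enough_special_inj_mor X F' \<Longrightarrow> F' \<subseteq> star X (Ph X F)"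
    using maximal by blast
qed

end

theorem theorem4p6:
  fixes X :: "('o, 'm, 'e) etcat" and F :: "'e set"
  assumes "extriangulated X"
    and "enough_inj_obj X"
    and "enough_proj_mor X"
    and "additive_subfunctor X F"
    and "enough_inj_mor X F"
  shows "(ideal X (perpL X (F_inj X F)) \<and> ideal X (perpR X (perpL X (F_inj X F))) \<and>
          complete_cotorsion_pair X (perpL X (F_inj X F)) (perpR X (perpL X (F_inj X F))))
       \<and> (perpR X (Ph X F) = F_inj X (star X (Ph X F)) \<and>
          ideal X (perpR X (Ph X F)) \<and> F_inj X F \<subseteq> perpR X (Ph X F) \<and>
          propC X (perpR X (Ph X F)) \<and>
          (\<forall>K. ideal X K \<and> F_inj X F \<subseteq> K \<and> propC X K \<longrightarrow> perpR X (Ph X F) \<subseteq> K))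
       \<and> (additive_subfunctor X (star X (Ph X F)) \<and> star X (Ph X F) \<subseteq> F \<and>
          enough_special_inj_mor X (star X (Ph X F)) \<and>
          (\<forall>F'. additive_subfunctor X F' \<and> F' \<subseteq> F \<and> enough_special_inj_mor X F'
                 \<longrightarrow> F' \<subseteq> star X (Ph X F)))"
proof -
  interpret thm_ctx X F
    using assms by (simp add: thm_ctx_def thm_ctx_axioms_def extri_def)
  show ?thesis using main .
qed

end
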